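(* Let $\mathcal C$ be a $G$-category and $(P,\phi)\colon\mathcal C\to\mathcal C/G$ the canonical functor. For every category $\mathcal C'$, the functor $(P,\phi)^*\colon\operatorname{Fun}(\mathcal C/G,\mathcal C')\to\operatorname{Inv}(\mathcal C,\mathcal C')$, sending a functor $H$ to $(HP,H\phi)$ and a natural transformation $\eta\colon H\to H'$ to $\eta P$, is an isomorphism of categories.
   Context: $\Bbbk$ is a commutative ring; all categories and functors are $\Bbbk$-linear; $G$ is a group. A $G$-category is a category $\mathcal C$ with a group homomorphism $A\colon G\to\operatorname{Aut}(\mathcal C)$; write $\alpha x=A_\alpha x$, $\alpha f=A_\alpha f$. An invariance adjuster of $F\colon\mathcal C\to\mathcal C'$ is a family of natural isomorphisms $\phi_\alpha\colon F\to FA_\alpha$ ($\alpha\in G$) with $\phi_1=\mathrm{id}$ and $(\phi_\beta A_\alpha)\phi_\alpha=\phi_{\beta\alpha}$; $(F,\phi)$ is a $G$-invariant functor. A morphism $(F,\phi)\to(F',\phi')$ is a natural transformation $\eta\colon F\to F'$ with $(\eta A_\alpha)\phi_\alpha=\phi'_\alpha\eta$ for all $\alpha$. $\operatorname{Inv}(\mathcal C,\mathcal C')$ is the category of $G$-invariant functors $\mathcal C\to\mathcal C'$ and their morphisms; $\operatorname{Fun}(\mathcal C/G,\mathcal C')$ is the category of functors and natural transformations. The orbit category $\mathcal C/G$: objects those of $\mathcal C$; morphisms $x\to y$ are row- and column-finite families $f=(f_{\beta,\alpha})_{(\alpha,\beta)\in G\times G}$, $f_{\beta,\alpha}\in\mathcal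 C(\alpha x,\beta y)$, with $f_{\gamma\beta,\gamma\alpha}=\gamma(f_{\beta,\alpha})$; composition $(gf)_{\beta,\alpha}=\sum_\gamma g_{\beta,\gamma}f_{\gamma,\alpha}$. The canonical functor: $Px=x$, $P(f)=(\delta_{\alpha,\beta}\alpha f)_{(\alpha,\beta)}$; $\phi_{\mu,x}=(\delta_{\alpha,\beta\mu}\mathrm{id}_{\alpha x})_{(\alpha,\beta)}\colon Px\to P\mu x$. *)

theory Defs
  imports "HOL-Algebra.Group" "HOL-Library.FuncSet"
begin

text \<open>A k-linear category: objects, hom-sets, composition (Cmp C x y z g f is g after f,
  for f : x -> y and g : y -> z), identities, and on every hom-set a k-module structure
  (addition, zero, scalar multiplication) such that composition is k-bilinear.\<close>

record ('o, 'm, 'k) lcat =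
  Ob    :: "'o set"
  Hom   :: "'o \<Rightarrow> 'o \<Rightarrow> 'm set"
  Cmp   :: "'o \<Rightarrow> 'o \<Rightarrow> 'o \<Rightarrow> 'm \<Rightarrow> 'm \<Rightarrow> 'm"
  Idm   :: "'o \<Rightarrow> 'm"
  Addm  :: "'o \<Rightarrow> 'o \<Rightarrow> 'm \<Rightarrow> 'm \<Rightarrow> 'm"
  Zerom :: "'o \<Rightarrow> 'o \<Rightarrow> 'm"
  Smul  :: "'o \<Rightarrow> 'o \<Rightarrow> 'k \<Rightarrow> 'm \<Rightarrow> 'm"

definition lin_cat :: "('o, 'm, 'k::comm_ring_1) lcat \<Rightarrow> bool" where
  "lin_cat C \<longleftrightarrow>
     (\<forall>x\<in>Ob C. Idm C x \<in> Hom C x x) \<and>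
     (\<forall>x\<in>Ob C. \<forall>y\<in>Ob C. \<forall>z\<in>Ob C. \<forall>f\<in>Hom C x y. \<forall>g\<in>Hom C y z.
         Cmp C x y z g f \<in> Hom C x z) \<and>
     (\<forall>w\<in>Ob C. \<forall>x\<in>Ob C. \<forall>y\<in>Ob C. \<forall>z\<in>Ob C.
        \<forall>f\<in>Hom C w x. \<forall>g\<in>Hom C x y. \<forall>h\<in>Hom C y z.
         Cmp C w y z h (Cmp C w x y g f) = Cmp C w x z (Cmp C x y z h g) f) \<and>
     (\<forall>x\<in>Ob C. \<forall>y\<in>Ob C. \<forall>f\<in>Hom C x y.
         Cmp C x y y (Idm C y) f = f \<and> Cmp C x x y f (Idm C x) = f) \<and>
     (\<forall>x\<in>Ob C. \<forall>y\<in>Ob C.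
        Zerom C x y \<in> Hom C x y \<and>
        (\<forall>f\<in>Hom C x y. \<forall>g\<in>Hom C x y. Addm C x y f g \<in> Hom C x y) \<and>
        (\<forall>a. \<forall>f\<in>Hom C x y. Smul C x y a f \<in> Hom C x y) \<and>
        (\<forall>f\<in>Hom C x y. \<forall>g\<in>Hom C x y. \<forall>h\<in>Hom C x y.
            Addm C x y (Addm C x y f g) h = Addm C x y f (Addm C x y g h)) \<and>
        (\<forall>f\<in>Hom C x y. \<forall>g\<in>Hom C x y. Addm C x y f g = Addm C x y g f) \<and>
        (\<forall>f\<in>Hom C x y. Addm C x y f (Zerom C x y) = f) \<and>
        (\<forall>f\<in>Hom C x y. \<exists>g\<in>Hom C x y. Addm C x y f g = Zerom C x y) \<and>
        (\<forall>a. \<forall>f\<in>Hom C x y. \<forall>g\<in>Hom C x y.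
            Smul C x y a (Addm C x y f g) = Addm C x y (Smul C x y a f) (Smul C x y a g)) \<and>
        (\<forall>a b. \<forall>f\<in>Hom C x y.
            Smul C x y (a + b) f = Addm C x y (Smul C x y a f) (Smul C x y b f)) \<and>
        (\<forall>a b. \<forall>f\<in>Hom C x y. Smul C x y (a * b) f = Smul C x y a (Smul C x y b f)) \<and>
        (\<forall>f\<in>Hom C x y. Smul C x y 1 f = f)) \<and>
     (\<forall>x\<in>Ob C. \<forall>y\<in>Ob C. \<forall>z\<in>Ob C.
        (\<forall>f\<in>Hom C x y. \<forall>g1\<in>Hom C y z. \<forall>g2\<in>Hom C y z.
            Cmp C x y z (Addm C y z g1 g2) f = Addm C x z (Cmp C x y z g1 f) (Cmp C x y z g2 f)) \<and>
        (\<forall>f1\<in>Hom C x y. \<forall>f2\<in>Hom C x y. \<forall>g\<in>Hom C y z.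
            Cmp C x y z g (Addm C x y f1 f2) = Addm C x z (Cmp C x y z g f1) (Cmp C x y z g f2)) \<and>
        (\<forall>a. \<forall>f\<in>Hom C x y. \<forall>g\<in>Hom C y z.
            Cmp C x y z (Smul C y z a g) f = Smul C x z a (Cmp C x y z g f) \<and>
            Cmp C x y z g (Smul C x y a f) = Smul C x z a (Cmp C x y z g f)))"

text \<open>Finite sums in a hom-set (over an arbitrary enumeration of the finite index set S;
  the result does not depend on the enumeration since addition is commutative).\<close>
definition hsum :: "('o, 'm, 'k) lcat \<Rightarrow> 'o \<Rightarrow> 'o \<Rightarrow> 'i set \<Rightarrow> ('i \<Rightarrow> 'm) \<Rightarrow> 'm" where
  "hsum C x y S g =
     foldr (\<lambda>i acc. Addm C x y (g i) acc) (SOME xs. distinct xs \<and> set xs = S) (Zerom C x y)"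

definition lin_functor ::
  "('o1, 'm1, 'k::comm_ring_1) lcat \<Rightarrow> ('o2, 'm2, 'k) lcat \<Rightarrow>
   ('o1 \<Rightarrow> 'o2) \<Rightarrow> ('o1 \<Rightarrow> 'o1 \<Rightarrow> 'm1 \<Rightarrow> 'm2) \<Rightarrow> bool" where
  "lin_functor C D Fo Fm \<longleftrightarrow>
     (\<forall>x\<in>Ob C. Fo x \<in> Ob D) \<and>
     (\<forall>x\<in>Ob C. \<forall>y\<in>Ob C. \<forall>f\<in>Hom C x y. Fm x y f \<in> Hom D (Fo x) (Fo y)) \<and>
     (\<forall>x\<in>Ob C. Fm x x (Idm C x) = Idm D (Fo x)) \<and>
     (\<forall>x\<in>Ob C. \<forall>y\<in>Ob C. \<forall>z\<in>Ob C. \<forall>f\<in>Hom C x y. \<forall>g\<in>Hom C y z.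
        Fm x z (Cmp C x y z g f) = Cmp D (Fo x) (Fo y) (Fo z) (Fm y z g) (Fm x y f)) \<and>
     (\<forall>x\<in>Ob C. \<forall>y\<in>Ob C. \<forall>f\<in>Hom C x y. \<forall>g\<in>Hom C x y.
        Fm x y (Addm C x y f g) = Addm D (Fo x) (Fo y) (Fm x y f) (Fm x y g)) \<and>
     (\<forall>x\<in>Ob C. \<forall>y\<in>Ob C. \<forall>a. \<forall>f\<in>Hom C x y.
        Fm x y (Smul C x y a f) = Smul D (Fo x) (Fo y) a (Fm x y f))"

text \<open>Extensionality conventions: a functor (resp. natural transformation, invariance adjuster)
  is represented by HOL functions which are undefined outside the relevant carriers, so that
  equality of these objects is equality of the mathematical objects.\<close>

definition ext_functor :: "('o1, 'm1, 'k) lcat \<Rightarrow> ('o1 \<Rightarrow> 'o2) \<Rightarrow> ('o1 \<Rightarrow> 'o1 \<Rightarrow> 'm1 \<Rightarrow> 'm2) \<Rightarrow> bool" where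
  "ext_functor C Fo Fm \<longleftrightarrow> Fo \<in> extensional (Ob C) \<and>
     (\<forall>x y. Fm x y \<in> extensional (if x \<in> Ob C \<and> y \<in> Ob C then Hom C x y else {}))"

definition nat_trans ::
  "('o1, 'm1, 'k) lcat \<Rightarrow> ('o2, 'm2, 'k) lcat \<Rightarrow>
   ('o1 \<Rightarrow> 'o2) \<times> ('o1 \<Rightarrow> 'o1 \<Rightarrow> 'm1 \<Rightarrow> 'm2) \<Rightarrow>
   ('o1 \<Rightarrow> 'o2) \<times> ('o1 \<Rightarrow> 'o1 \<Rightarrow> 'm1 \<Rightarrow> 'm2) \<Rightarrow> ('o1 \<Rightarrow> 'm2) \<Rightarrow> bool" where
  "nat_trans C D F F' \<eta> \<longleftrightarrow>
     \<eta> \<in> extensional (Ob C) \<and>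
     (\<forall>x\<in>Ob C. \<eta> x \<in> Hom D (fst F x) (fst F' x)) \<and>
     (\<forall>x\<in>Ob C. \<forall>y\<in>Ob C. \<forall>f\<in>Hom C x y.
        Cmp D (fst F x) (fst F y) (fst F' y) (\<eta> y) (snd F x y f) =
        Cmp D (fst F x) (fst F' x) (fst F' y) (snd F' x y f) (\<eta> x))"

definition gcat ::
  "('o, 'm, 'k::comm_ring_1) lcat \<Rightarrow> 'g monoid \<Rightarrow> ('g \<Rightarrow> 'o \<Rightarrow> 'o) \<Rightarrow>
   ('g \<Rightarrow> 'o \<Rightarrow> 'o \<Rightarrow> 'm \<Rightarrow> 'm) \<Rightarrow> bool" where
  "gcat C G Ao Am \<longleftrightarrow> group G \<and> lin_cat C \<and>
     (\<forall>a\<in>carrier G. lin_functor C C (Ao a) (Am a) \<and>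
        bij_betw (Ao a) (Ob C) (Ob C) \<and>
        (\<forall>x\<in>Ob C. \<forall>y\<in>Ob C. bij_betw (Am a x y) (Hom C x y) (Hom C (Ao a x) (Ao a y)))) \<and>
     (\<forall>x\<in>Ob C. Ao \<one>\<^bsub>G\<^esub> x = x) \<and>
     (\<forall>x\<in>Ob C. \<forall>y\<in>Ob C. \<forall>f\<in>Hom C x y. Am \<one>\<^bsub>G\<^esub> x y f = f) \<and>
     (\<forall>a\<in>carrier G. \<forall>b\<in>carrier G. \<forall>x\<in>Ob C. Ao (b \<otimes>\<^bsub>G\<^esub> a) x = Ao b (Ao a x)) \<and>
     (\<forall>a\<in>carrier G. \<forall>b\<in>carrier G. \<forall>x\<in>Ob C. \<forall>y\<in>Ob C. \<forall>f\<in>Hom C x y.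
        Am (b \<otimes>\<^bsub>G\<^esub> a) x y f = Am b (Ao a x) (Ao a y) (Am a x y f))"

section \<open>The orbit category C/G\<close>

text \<open>A morphism x -> y of C/G is a family f indexed by G x G; the entry f_{b,a} in
  C(a x, b y) is stored as the value f (b, a).  Families are undefined outside
  carrier G x carrier G.\<close>

definition orbit_cat ::
  "('o, 'm, 'k::comm_ring_1) lcat \<Rightarrow> 'g monoid \<Rightarrow> ('g \<Rightarrow> 'o \<Rightarrow> 'o) \<Rightarrow>
   ('g \<Rightarrow> 'o \<Rightarrow> 'o \<Rightarrow> 'm \<Rightarrow> 'm) \<Rightarrow> ('o, 'g \<times> 'g \<Rightarrow> 'm, 'k) lcat" where
  "orbit_cat C G Ao Am =
   \<lparr> Ob = Ob C,
     Hom = (\<lambda>x y. {f. f \<in> extensional (carrier G \<times> carrier G) \<and>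
              (\<forall>b\<in>carrier G. \<forall>a\<in>carrier G. f (b, a) \<in> Hom C (Ao a x) (Ao b y)) \<and>
              (\<forall>c\<in>carrier G. \<forall>b\<in>carrier G. \<forall>a\<in>carrier G.
                  f (c \<otimes>\<^bsub>G\<^esub> b, c \<otimes>\<^bsub>G\<^esub> a) = Am c (Ao a x) (Ao b y) (f (b, a))) \<and>
              (\<forall>b\<in>carrier G. finite {a\<in>carrier G. f (b, a) \<noteq> Zerom C (Ao a x) (Ao b y)}) \<and>
              (\<forall>a\<in>carrier G. finite {b\<in>carrier G. f (b, a) \<noteq> Zerom C (Ao a x) (Ao b y)})}),
     Cmp = (\<lambda>x y z g f. restrict (\<lambda>(b, a).
              hsum C (Ao a x) (Ao b z) {c\<in>carrier G. f (c, a) \<noteq> Zerom C (Ao a x) (Ao c y)}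
                (\<lambda>c. Cmp C (Ao a x) (Ao c y) (Ao b z) (g (b, c)) (f (c, a))))
              (carrier G \<times> carrier G)),
     Idm = (\<lambda>x. restrict (\<lambda>(b, a). if a = b then Idm C (Ao a x) else Zerom C (Ao a x) (Ao b x))
              (carrier G \<times> carrier G)),
     Addm = (\<lambda>x y f g. restrict (\<lambda>(b, a). Addm C (Ao a x) (Ao b y) (f (b, a)) (g (b, a)))
              (carrier G \<times> carrier G)),
     Zerom = (\<lambda>x y. restrict (\<lambda>(b, a). Zerom C (Ao a x) (Ao b y)) (carrier G \<times> carrier G)),
     Smul = (\<lambda>x y k f. restrict (\<lambda>(b, a). Smul C (Ao a x) (Ao b y) k (f (b, a)))
              (carrier G \<times> carrier G)) \<rparr>"

definition canP_mor ::
  "('o, 'm, 'k) lcat \<Rightarrow> 'g monoid \<Rightarrow> ('g \<Rightarrow> 'o \<Rightarrow> 'o) \<Rightarrow> ('g \<Rightarrow> 'o \<Rightarrow> 'o \<Rightarrow> 'm \<Rightarrow> 'm) \<Rightarrow>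
   'o \<Rightarrow> 'o \<Rightarrow> 'm \<Rightarrow> ('g \<times> 'g \<Rightarrow> 'm)" where
  "canP_mor C G Ao Am x y f = restrict (\<lambda>(b, a).
      if a = b then Am a x y f else Zerom C (Ao a x) (Ao b y)) (carrier G \<times> carrier G)"

definition canP_phi ::
  "('o, 'm, 'k) lcat \<Rightarrow> 'g monoid \<Rightarrow> ('g \<Rightarrow> 'o \<Rightarrow> 'o) \<Rightarrow>
   'g \<Rightarrow> 'o \<Rightarrow> ('g \<times> 'g \<Rightarrow> 'm)" where
  "canP_phi C G Ao m x = restrict (\<lambda>(b, a).
      if a = b \<otimes>\<^bsub>G\<^esub> m then Idm C (Ao a x) else Zerom C (Ao a x) (Ao b (Ao m x)))
      (carrier G \<times> carrier G)"

definition Fun_obj :: "('o1, 'm1, 'k::comm_ring_1) lcat \<Rightarrow> ('o2, 'm2, 'k) lcat \<Rightarrow>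
   (('o1 \<Rightarrow> 'o2) \<times> ('o1 \<Rightarrow> 'o1 \<Rightarrow> 'm1 \<Rightarrow> 'm2)) set" where
  "Fun_obj B D = {(Fo, Fm). lin_functor B D Fo Fm \<and> ext_functor B Fo Fm}"

definition Fun_hom :: "('o1, 'm1, 'k) lcat \<Rightarrow> ('o2, 'm2, 'k) lcat \<Rightarrow>
   ('o1 \<Rightarrow> 'o2) \<times> ('o1 \<Rightarrow> 'o1 \<Rightarrow> 'm1 \<Rightarrow> 'm2) \<Rightarrow>
   ('o1 \<Rightarrow> 'o2) \<times> ('o1 \<Rightarrow> 'o1 \<Rightarrow> 'm1 \<Rightarrow> 'm2) \<Rightarrow> ('o1 \<Rightarrow> 'm2) set" where
  "Fun_hom B D F F' = {\<eta>. nat_trans B D F F' \<eta>}"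

definition inv_functor ::
  "('o, 'm, 'k::comm_ring_1) lcat \<Rightarrow> ('o2, 'm2, 'k) lcat \<Rightarrow> 'g monoid \<Rightarrow>
   ('g \<Rightarrow> 'o \<Rightarrow> 'o) \<Rightarrow> ('g \<Rightarrow> 'o \<Rightarrow> 'o \<Rightarrow> 'm \<Rightarrow> 'm) \<Rightarrow>
   ('o \<Rightarrow> 'o2) \<Rightarrow> ('o \<Rightarrow> 'o \<Rightarrow> 'm \<Rightarrow> 'm2) \<Rightarrow> ('g \<Rightarrow> 'o \<Rightarrow> 'm2) \<Rightarrow> bool" where
  "inv_functor C D G Ao Am Fo Fm \<phi> \<longleftrightarrow>
     lin_functor C D Fo Fm \<and>
     \<comment> \<open>each phi_a is a natural transformation F -> F A_a ...\<close>
     (\<forall>a\<in>carrier G. \<forall>x\<in>Ob C. \<phi> a x \<in> Hom D (Fo x) (Fo (Ao a x))) \<and>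
     (\<forall>a\<in>carrier G. \<forall>x\<in>Ob C. \<forall>y\<in>Ob C. \<forall>f\<in>Hom C x y.
        Cmp D (Fo x) (Fo y) (Fo (Ao a y)) (\<phi> a y) (Fm x y f) =
        Cmp D (Fo x) (Fo (Ao a x)) (Fo (Ao a y)) (Fm (Ao a x) (Ao a y) (Am a x y f)) (\<phi> a x)) \<and>
     \<comment> \<open>... which is a natural isomorphism\<close>
     (\<forall>a\<in>carrier G. \<forall>x\<in>Ob C. \<exists>\<psi>\<in>Hom D (Fo (Ao a x)) (Fo x).
        Cmp D (Fo x) (Fo (Ao a x)) (Fo x) \<psi> (\<phi> a x) = Idm D (Fo x) \<and>
        Cmp D (Fo (Ao a x)) (Fo x) (Fo (Ao a x)) (\<phi> a x) \<psi> = Idm D (Fo (Ao a x))) \<and>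
     \<comment> \<open>phi_1 = id\<close>
     (\<forall>x\<in>Ob C. \<phi> \<one>\<^bsub>G\<^esub> x = Idm D (Fo x)) \<and>
     \<comment> \<open>(phi_b A_a) phi_a = phi_{ba}\<close>
     (\<forall>a\<in>carrier G. \<forall>b\<in>carrier G. \<forall>x\<in>Ob C.
        Cmp D (Fo x) (Fo (Ao a x)) (Fo (Ao b (Ao a x))) (\<phi> b (Ao a x)) (\<phi> a x) =
        \<phi> (b \<otimes>\<^bsub>G\<^esub> a) x)"

definition Inv_obj ::
  "('o, 'm, 'k::comm_ring_1) lcat \<Rightarrow> ('o2, 'm2, 'k) lcat \<Rightarrow> 'g monoid \<Rightarrow>
   ('g \<Rightarrow> 'o \<Rightarrow> 'o) \<Rightarrow> ('g \<Rightarrow> 'o \<Rightarrow> 'o \<Rightarrow> 'm \<Rightarrow> 'm) \<Rightarrow>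
   ((('o \<Rightarrow> 'o2) \<times> ('o \<Rightarrow> 'o \<Rightarrow> 'm \<Rightarrow> 'm2)) \<times> ('g \<Rightarrow> 'o \<Rightarrow> 'm2)) set" where
  "Inv_obj C D G Ao Am = {((Fo, Fm), \<phi>). inv_functor C D G Ao Am Fo Fm \<phi> \<and>
      ext_functor C Fo Fm \<and>
      (\<forall>a x. a \<notin> carrier G \<or> x \<notin> Ob C \<longrightarrow> \<phi> a x = undefined)}"

definition Inv_hom ::
  "('o, 'm, 'k) lcat \<Rightarrow> ('o2, 'm2, 'k) lcat \<Rightarrow> 'g monoid \<Rightarrow> ('g \<Rightarrow> 'o \<Rightarrow> 'o) \<Rightarrow>
   (('o \<Rightarrow> 'o2) \<times> ('o \<Rightarrow> 'o \<Rightarrow> 'm \<Rightarrow> 'm2)) \<times> ('g \<Rightarrow> 'o \<Rightarrow> 'm2) \<Rightarrow>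
   (('o \<Rightarrow> 'o2) \<times> ('o \<Rightarrow> 'o \<Rightarrow> 'm \<Rightarrow> 'm2)) \<times> ('g \<Rightarrow> 'o \<Rightarrow> 'm2) \<Rightarrow> ('o \<Rightarrow> 'm2) set" where
  "Inv_hom C D G Ao P P' = {\<eta>. nat_trans C D (fst P) (fst P') \<eta> \<and>
      (\<forall>a\<in>carrier G. \<forall>x\<in>Ob C.
         Cmp D (fst (fst P) x) (fst (fst P) (Ao a x)) (fst (fst P') (Ao a x))
           (\<eta> (Ao a x)) (snd P a x) =
         Cmp D (fst (fst P) x) (fst (fst P') x) (fst (fst P') (Ao a x))
           (snd P' a x) (\<eta> x))}"

definition nt_id :: "('o1, 'm1, 'k) lcat \<Rightarrow> ('o2, 'm2, 'k) lcat \<Rightarrow> ('o1 \<Rightarrow> 'o2) \<Rightarrow> ('o1 \<Rightarrow> 'm2)" where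
  "nt_id B D Fo = restrict (\<lambda>x. Idm D (Fo x)) (Ob B)"

definition nt_comp :: "('o1, 'm1, 'k) lcat \<Rightarrow> ('o2, 'm2, 'k) lcat \<Rightarrow>
   ('o1 \<Rightarrow> 'o2) \<Rightarrow> ('o1 \<Rightarrow> 'o2) \<Rightarrow> ('o1 \<Rightarrow> 'o2) \<Rightarrow> ('o1 \<Rightarrow> 'm2) \<Rightarrow> ('o1 \<Rightarrow> 'm2) \<Rightarrow> ('o1 \<Rightarrow> 'm2)" where
  "nt_comp B D Fo Fo' Fo'' \<eta>' \<eta> = restrict (\<lambda>x. Cmp D (Fo x) (Fo' x) (Fo'' x) (\<eta>' x) (\<eta> x)) (Ob B)"

definition pullback_obj ::
  "('o, 'm, 'k) lcat \<Rightarrow> 'g monoid \<Rightarrow> ('g \<Rightarrow> 'o \<Rightarrow> 'o) \<Rightarrow> ('g \<Rightarrow> 'o \<Rightarrow> 'o \<Rightarrow> 'm \<Rightarrow> 'm) \<Rightarrow>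
   ('o \<Rightarrow> 'o2) \<times> ('o \<Rightarrow> 'o \<Rightarrow> ('g \<times> 'g \<Rightarrow> 'm) \<Rightarrow> 'm2) \<Rightarrow>
   (('o \<Rightarrow> 'o2) \<times> ('o \<Rightarrow> 'o \<Rightarrow> 'm \<Rightarrow> 'm2)) \<times> ('g \<Rightarrow> 'o \<Rightarrow> 'm2)" where
  "pullback_obj C G Ao Am H =
     ((restrict (\<lambda>x. fst H x) (Ob C),
       (\<lambda>x y. if x \<in> Ob C \<and> y \<in> Ob C
              then restrict (\<lambda>f. snd H x y (canP_mor C G Ao Am x y f)) (Hom C x y)
              else (\<lambda>_. undefined))),
      (\<lambda>a x. if a \<in> carrier G \<and> x \<in> Ob C
             then snd H x (Ao a x) (canP_phi C G Ao a x) else undefined))"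

text \<open>On morphisms: eta is sent to eta P (P is the identity on objects).\<close>
definition pullback_mor :: "('o, 'm, 'k) lcat \<Rightarrow> ('o \<Rightarrow> 'm2) \<Rightarrow> ('o \<Rightarrow> 'm2)" where
  "pullback_mor C \<eta> = restrict (\<lambda>x. \<eta> x) (Ob C)"

end

theory Submission
  imports Defs "HOL-Algebra.FiniteProduct"
begin


definition HM :: "('o, 'm, 'k) lcat \<Rightarrow> 'o \<Rightarrow> 'o \<Rightarrow> 'm monoid" where
  "HM D x y = \<lparr>carrier = Hom D x y, mult = Addm D x y, one = Zerom D x y\<rparr>"

definition lst :: "'i set \<Rightarrow> 'i list" where "lst S = (SOME xs. distinct xs \<and> set xs = S)"

lemma hsum_lst: "hsum D x y S g = foldr (\<lambda>i acc. Addm D x y (g i) acc) (lst S) (Zerom D x y)"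
  unfolding hsum_def lst_def ..

lemma lst: assumes "finite S" shows "distinct (lst S)" "set (lst S) = S"
proof -
  obtain xs where "distinct xs \<and> set xs = S" using finite_distinct_list assms by blast
  then have "distinct (lst S) \<and> set (lst S) = S" unfolding lst_def by (rule someI)
  then show "distinct (lst S)" "set (lst S) = S" by auto
qed

lemma foldr_add_cong: "\<forall>i\<in>set xs. g i = g' i \<Longrightarrow>
   foldr (\<lambda>i acc. Addm D x y (g i) acc) xs z = foldr (\<lambda>i acc. Addm D x y (g' i) acc) xs z"
  by (induction xs) auto

lemma hsum_cong:
  assumes "finite S" "\<And>i. i \<in> S \<Longrightarrow> g i = g' i"
  shows "hsum D x y S g = hsum D x y S g'"
proof -
  have "\<forall>i\<in>set (lst S). g i = g' i" using assms lst by blast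
  then have "foldr (\<lambda>i acc. Addm D x y (g i) acc) (lst S) (Zerom D x y) = foldr (\<lambda>i acc. Addm D x y (g' i) acc) (lst S) (Zerom D x y)"
    by (rule foldr_add_cong)
  then show ?thesis by (simp add: hsum_lst)
qed

lemma hsum_empty[simp]: fixes g :: "'i \<Rightarrow> 'm" shows "hsum D x y {} g = Zerom D x y"
proof -
  have e: "(SOME xs. distinct xs \<and> set xs = {}) = ([] :: 'i list)" by (rule some_equality) auto
  show ?thesis unfolding hsum_def by (subst e) simp
qed

lemma hsum_map:
  assumes "finite S" "\<And>i. i \<in> S \<Longrightarrow> g i \<in> Hom C x y"
    and cl0: "Zerom C x y \<in> Hom C x y"
    and cla: "\<And>u v. u \<in> Hom C x y \<Longrightarrow> v \<in> Hom C x y \<Longrightarrow> Addm C x y u v \<in> Hom C x y"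
    and h0: "h (Zerom C x y) = Zerom D x' y'"
    and ha: "\<And>u v. u \<in> Hom C x y \<Longrightarrow> v \<in> Hom C x y \<Longrightarrow> h (Addm C x y u v) = Addm D x' y' (h u) (h v)"
  shows "h (hsum C x y S g) = hsum D x' y' S (\<lambda>i. h (g i))"
proof -
  define xs where "xs = lst S"
  have xs: "set xs = S" using lst assms(1) xs_def by blast
  have "\<forall>i\<in>set xs. g i \<in> Hom C x y \<Longrightarrow> foldr (\<lambda>i acc. Addm C x y (g i) acc) xs (Zerom C x y) \<in> Hom C x y \<and>
     h (foldr (\<lambda>i acc. Addm C x y (g i) acc) xs (Zerom C x y)) = foldr (\<lambda>i acc. Addm D x' y' (h (g i)) acc) xs (Zerom D x' y')"
    by (induction xs) (auto simp: cl0 cla h0 ha)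
  then show ?thesis using xs assms(2) unfolding hsum_lst xs_def by metis
qed

locale lcat =
  fixes D :: "('o, 'm, 'k::comm_ring_1) lcat"
  assumes lin: "lin_cat D"
begin

lemmas L = lin[unfolded lin_cat_def]
lemmas L1 = L[THEN conjunct1]
lemmas L2 = L[THEN conjunct2, THEN conjunct1]
lemmas L3 = L[THEN conjunct2, THEN conjunct2, THEN conjunct1]
lemmas L4 = L[THEN conjunct2, THEN conjunct2, THEN conjunct2, THEN conjunct1]
lemmas L5 = L[THEN conjunct2, THEN conjunct2, THEN conjunct2, THEN conjunct2, THEN conjunct1]
lemmas L5r = L5[rule_format]
lemmas L5_1 = L5r[THEN conjunct1]
lemmas L5_2 = L5r[THEN conjunct2, THEN conjunct1]
lemmas L5_3 = L5r[THEN conjunct2, THEN conjunct2, THEN conjunct1]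
lemmas L5_4 = L5r[THEN conjunct2, THEN conjunct2, THEN conjunct2, THEN conjunct1]
lemmas L5_5 = L5r[THEN conjunct2, THEN conjunct2, THEN conjunct2, THEN conjunct2, THEN conjunct1]
lemmas L5_6 = L5r[THEN conjunct2, THEN conjunct2, THEN conjunct2, THEN conjunct2, THEN conjunct2, THEN conjunct1]
lemmas L5_7 = L5r[THEN conjunct2, THEN conjunct2, THEN conjunct2, THEN conjunct2, THEN conjunct2, THEN conjunct2, THEN conjunct1]
lemmas L5_8 = L5r[THEN conjunct2, THEN conjunct2, THEN conjunct2, THEN conjunct2, THEN conjunct2, THEN conjunct2, THEN conjunct2, THEN conjunct1]
lemmas L6 = L[THEN conjunct2, THEN conjunct2, THEN conjunct2, THEN conjunct2, THEN conjunct2]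

lemmas L6r = L6[rule_format]
lemmas L6_1 = L6r[THEN conjunct1]
lemmas L6_2 = L6r[THEN conjunct2, THEN conjunct1]
lemmas L6_3 = L6r[THEN conjunct2, THEN conjunct2]

lemma idm_hom[intro,simp]: "x \<in> Ob D \<Longrightarrow> Idm D x \<in> Hom D x x"
  using L1 by blast
lemma cmp_hom[intro,simp]: "\<lbrakk>x \<in> Ob D; y \<in> Ob D; z \<in> Ob D; f \<in> Hom D x y; g \<in> Hom D y z\<rbrakk>
   \<Longrightarrow> Cmp D x y z g f \<in> Hom D x z"
  using L2 by blast
lemma cmp_assoc: "\<lbrakk>w \<in> Ob D; x \<in> Ob D; y \<in> Ob D; z \<in> Ob D; f \<in> Hom D w x; g \<in> Hom D x y; h \<in> Hom D y z\<rbrakk>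
   \<Longrightarrow> Cmp D w y z h (Cmp D w x y g f) = Cmp D w x z (Cmp D x y z h g) f"
  using L3 by blast
lemma cmp_id_l[simp]: "\<lbrakk>x \<in> Ob D; y \<in> Ob D; f \<in> Hom D x y\<rbrakk> \<Longrightarrow> Cmp D x y y (Idm D y) f = f"
  using L4 by blast
lemma cmp_id_r[simp]: "\<lbrakk>x \<in> Ob D; y \<in> Ob D; f \<in> Hom D x y\<rbrakk> \<Longrightarrow> Cmp D x x y f (Idm D x) = f"
  using L4 by blast
lemma zero_hom[intro,simp]: "\<lbrakk>x \<in> Ob D; y \<in> Ob D\<rbrakk> \<Longrightarrow> Zerom D x y \<in> Hom D x y"
  using L5_1 by blast
lemma add_hom[intro,simp]: "\<lbrakk>x \<in> Ob D; y \<in> Ob D; f \<in> Hom D x y; g \<in> Hom D x y\<rbrakk> \<Longrightarrow> Addm D x y f g \<in> Hom D x y"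
  using L5_2 by blast
lemma smul_hom[intro,simp]: "\<lbrakk>x \<in> Ob D; y \<in> Ob D; f \<in> Hom D x y\<rbrakk> \<Longrightarrow> Smul D x y a f \<in> Hom D x y"
  using L5_3 by blast
lemma add_assoc: "\<lbrakk>x \<in> Ob D; y \<in> Ob D; f \<in> Hom D x y; g \<in> Hom D x y; h \<in> Hom D x y\<rbrakk> \<Longrightarrow>
   Addm D x y (Addm D x y f g) h = Addm D x y f (Addm D x y g h)"
  using L5_4 by blast
lemma add_comm: "\<lbrakk>x \<in> Ob D; y \<in> Ob D; f \<in> Hom D x y; g \<in> Hom D x y\<rbrakk> \<Longrightarrow> Addm D x y f g = Addm D x y g f"
  using L5_5 by blast
lemma add_zero[simp]: "\<lbrakk>x \<in> Ob D; y \<in> Ob D; f \<in> Hom D x y\<rbrakk> \<Longrightarrow> Addm D x y f (Zerom D x y) = f"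
  using L5_6 by blast
lemma zero_add[simp]: "\<lbrakk>x \<in> Ob D; y \<in> Ob D; f \<in> Hom D x y\<rbrakk> \<Longrightarrow> Addm D x y (Zerom D x y) f = f"
  using add_comm add_zero zero_hom by metis
lemma add_inv: "\<lbrakk>x \<in> Ob D; y \<in> Ob D; f \<in> Hom D x y\<rbrakk> \<Longrightarrow> \<exists>g\<in>Hom D x y. Addm D x y f g = Zerom D x y"
  using L5_7 by blast
lemma smul_add: "\<lbrakk>x \<in> Ob D; y \<in> Ob D; f \<in> Hom D x y; g \<in> Hom D x y\<rbrakk> \<Longrightarrow>
   Smul D x y a (Addm D x y f g) = Addm D x y (Smul D x y a f) (Smul D x y a g)"
  using L5_8 by blast
lemma cmp_add_l: "\<lbrakk>x \<in> Ob D; y \<in> Ob D; z \<in> Ob D; f \<in> Hom D x y; g1 \<in> Hom D y z; g2 \<in> Hom D y z\<rbrakk> \<Longrightarrow>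
   Cmp D x y z (Addm D y z g1 g2) f = Addm D x z (Cmp D x y z g1 f) (Cmp D x y z g2 f)"
  using L6_1 by blast
lemma cmp_add_r: "\<lbrakk>x \<in> Ob D; y \<in> Ob D; z \<in> Ob D; f1 \<in> Hom D x y; f2 \<in> Hom D x y; g \<in> Hom D y z\<rbrakk> \<Longrightarrow>
   Cmp D x y z g (Addm D x y f1 f2) = Addm D x z (Cmp D x y z g f1) (Cmp D x y z g f2)"
  using L6_2 by blast

lemma add_idem_zero:
  assumes "x \<in> Ob D" "y \<in> Ob D" "u \<in> Hom D x y" "Addm D x y u u = u"
  shows "u = Zerom D x y"
proof -
  obtain v where v: "v \<in> Hom D x y" "Addm D x y u v = Zerom D x y" using add_inv assms by blast
  have "Zerom D x y = Addm D x y (Addm D x y u u) v" using assms v by simp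
  also have "\<dots> = Addm D x y u (Addm D x y u v)" by (rule add_assoc) (use assms v in auto)
  also have "\<dots> = u" using assms v by simp
  finally show ?thesis by (rule sym)
qed

lemma cmp_zero_l[simp]: "\<lbrakk>x \<in> Ob D; y \<in> Ob D; z \<in> Ob D; f \<in> Hom D x y\<rbrakk> \<Longrightarrow>
   Cmp D x y z (Zerom D y z) f = Zerom D x z"
  by (rule add_idem_zero) (auto simp: cmp_add_l[symmetric])
lemma cmp_zero_r[simp]: "\<lbrakk>x \<in> Ob D; y \<in> Ob D; z \<in> Ob D; g \<in> Hom D y z\<rbrakk> \<Longrightarrow>
   Cmp D x y z g (Zerom D x y) = Zerom D x z"
  by (rule add_idem_zero) (auto simp: cmp_add_r[symmetric])
lemma smul_zero[simp]: "\<lbrakk>x \<in> Ob D; y \<in> Ob D\<rbrakk> \<Longrightarrow> Smul D x y a (Zerom D x y) = Zerom D x y"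
  by (rule add_idem_zero) (auto simp: smul_add[symmetric])

lemma HM_simps[simp]: "carrier (HM D x y) = Hom D x y" "mult (HM D x y) = Addm D x y" "one (HM D x y) = Zerom D x y"
  by (auto simp: HM_def)

lemma HM_comm_monoid: "\<lbrakk>x \<in> Ob D; y \<in> Ob D\<rbrakk> \<Longrightarrow> comm_monoid (HM D x y)"
proof (rule comm_monoidI)
  fix a b c assume "x \<in> Ob D" "y \<in> Ob D" "a \<in> carrier (HM D x y)" "b \<in> carrier (HM D x y)" "c \<in> carrier (HM D x y)"
  then show "a \<otimes>\<^bsub>HM D x y\<^esub> b \<otimes>\<^bsub>HM D x y\<^esub> c = a \<otimes>\<^bsub>HM D x y\<^esub> (b \<otimes>\<^bsub>HM D x y\<^esub> c)"
    by (simp add: add_assoc)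
qed (auto simp: add_comm)

lemma foldr_hom:
  assumes "x \<in> Ob D" "y \<in> Ob D" "\<forall>i\<in>set xs. g i \<in> Hom D x y"
  shows "foldr (\<lambda>i acc. Addm D x y (g i) acc) xs (Zerom D x y) \<in> Hom D x y"
  using assms by (induction xs) auto

lemma foldr_finprod:
  assumes "x \<in> Ob D" "y \<in> Ob D" "\<forall>i\<in>set xs. g i \<in> Hom D x y" "distinct xs"
  shows "foldr (\<lambda>i acc. Addm D x y (g i) acc) xs (Zerom D x y) = finprod (HM D x y) g (set xs)"
proof -
  interpret M: comm_monoid "HM D x y" using HM_comm_monoid assms by blast
  show ?thesis using assms(3,4)
    by (induction xs) (auto simp: Pi_def)
qed

lemma hsum_finprod:
  assumes "x \<in> Ob D" "y \<in> Ob D" "finite S" "\<forall>i\<in>S. g i \<in> Hom D x y"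
  shows "hsum D x y S g = finprod (HM D x y) g S"
  using foldr_finprod[of x y "lst S" g] lst[OF assms(3)] assms by (simp add: hsum_lst)

lemma hsum_hom[intro,simp]:
  assumes "x \<in> Ob D" "y \<in> Ob D" "finite S" "\<And>i. i\<in>S \<Longrightarrow> g i \<in> Hom D x y"
  shows "hsum D x y S g \<in> Hom D x y"
proof -
  interpret M: comm_monoid "HM D x y" using HM_comm_monoid assms by blast
  have "finprod (HM D x y) g S \<in> carrier (HM D x y)" by (rule M.finprod_closed) (use assms in auto)
  then show ?thesis using assms by (subst hsum_finprod) auto
qed



lemma hsum_zero:
  assumes "x \<in> Ob D" "y \<in> Ob D" "finite S" "\<And>i. i \<in> S \<Longrightarrow> g i = Zerom D x y"
  shows "hsum D x y S g = Zerom D x y"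
proof -
  interpret M: comm_monoid "HM D x y" using HM_comm_monoid assms by blast
  have "finprod (HM D x y) g S = one (HM D x y)" by (rule M.finprod_one_eqI) (use assms in auto)
  then show ?thesis using assms by (subst hsum_finprod) auto
qed

lemma hsum_single[simp]:
  assumes "x \<in> Ob D" "y \<in> Ob D" "g i \<in> Hom D x y"
  shows "hsum D x y {i} g = g i"
proof -
  interpret M: comm_monoid "HM D x y" using HM_comm_monoid assms by blast
  have "finprod (HM D x y) g (insert i {}) = g i \<otimes>\<^bsub>HM D x y\<^esub> finprod (HM D x y) g {}"
    by (rule M.finprod_insert) (use assms in auto)
  then show ?thesis using assms by (subst hsum_finprod) auto
qed

lemma hsum_neutral:
  assumes "x \<in> Ob D" "y \<in> Ob D" "finite A" "finite B"
    "\<And>i. i \<in> A \<Longrightarrow> g i \<in> Hom D x y" "\<And>i. i \<in> B \<Longrightarrow> h i \<in> Hom D x y"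
    "\<And>i. i \<in> B - A \<Longrightarrow> h i = Zerom D x y" "\<And>i. i \<in> A - B \<Longrightarrow> g i = Zerom D x y"
    "\<And>i. i \<in> A \<inter> B \<Longrightarrow> g i = h i"
  shows "hsum D x y A g = hsum D x y B h"
proof -
  interpret M: comm_monoid "HM D x y" using HM_comm_monoid assms by blast
  have "finprod (HM D x y) g A = finprod (HM D x y) h B"
    by (rule M.finprod_mono_neutral_cong) (use assms in auto)
  then show ?thesis using assms by (simp add: hsum_finprod)
qed

lemma hsum_add:
  assumes "x \<in> Ob D" "y \<in> Ob D" "finite A"
    "\<And>i. i \<in> A \<Longrightarrow> g i \<in> Hom D x y" "\<And>i. i \<in> A \<Longrightarrow> h i \<in> Hom D x y"
  shows "hsum D x y A (\<lambda>i. Addm D x y (g i) (h i)) = Addm D x y (hsum D x y A g) (hsum D x y A h)"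
proof -
  interpret M: comm_monoid "HM D x y" using HM_comm_monoid assms by blast
  have "finprod (HM D x y) (\<lambda>i. g i \<otimes>\<^bsub>HM D x y\<^esub> h i) A = finprod (HM D x y) g A \<otimes>\<^bsub>HM D x y\<^esub> finprod (HM D x y) h A"
    by (rule M.finprod_multf) (use assms in auto)
  then show ?thesis using assms by (simp add: hsum_finprod)
qed

lemma hsum_reindex:
  assumes "x \<in> Ob D" "y \<in> Ob D" "finite A" "inj_on k A"
    "\<And>i. i \<in> k ` A \<Longrightarrow> g i \<in> Hom D x y"
  shows "hsum D x y (k ` A) g = hsum D x y A (\<lambda>i. g (k i))"
proof -
  interpret M: comm_monoid "HM D x y" using HM_comm_monoid assms by blast
  have "finprod (HM D x y) g (k ` A) = finprod (HM D x y) (\<lambda>i. g (k i)) A"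
    by (rule M.finprod_reindex) (use assms in auto)
  then show ?thesis using assms by (simp add: hsum_finprod)
qed

lemma hsum_insert:
  assumes "x \<in> Ob D" "y \<in> Ob D" "finite A" "a \<notin> A"
    "\<And>i. i \<in> insert a A \<Longrightarrow> g i \<in> Hom D x y"
  shows "hsum D x y (insert a A) g = Addm D x y (g a) (hsum D x y A g)"
proof -
  interpret M: comm_monoid "HM D x y" using HM_comm_monoid assms by blast
  have "finprod (HM D x y) g (insert a A) = g a \<otimes>\<^bsub>HM D x y\<^esub> finprod (HM D x y) g A"
    by (rule M.finprod_insert) (use assms in auto)
  then show ?thesis using assms by (simp add: hsum_finprod)
qed

lemma hsum_swap:
  assumes "x \<in> Ob D" "y \<in> Ob D" "finite A" "finite B"
    "\<And>i j. i \<in> A \<Longrightarrow> j \<in> B \<Longrightarrow> g i j \<in> Hom D x y"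
  shows "hsum D x y A (\<lambda>i. hsum D x y B (g i)) = hsum D x y B (\<lambda>j. hsum D x y A (\<lambda>i. g i j))"
  using assms(3,5)
proof (induction A rule: finite_induct)
  case empty
  then show ?case using assms by (simp add: hsum_zero)
next
  case (insert a A)
  have "hsum D x y (insert a A) (\<lambda>i. hsum D x y B (g i)) = Addm D x y (hsum D x y B (g a)) (hsum D x y A (\<lambda>i. hsum D x y B (g i)))"
    using insert assms by (subst hsum_insert) auto
  also have "\<dots> = Addm D x y (hsum D x y B (g a)) (hsum D x y B (\<lambda>j. hsum D x y A (\<lambda>i. g i j)))"
    using insert by simp
  also have "\<dots> = hsum D x y B (\<lambda>j. Addm D x y (g a j) (hsum D x y A (\<lambda>i. g i j)))"
    using insert assms by (subst hsum_add) auto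
  also have "\<dots> = hsum D x y B (\<lambda>j. hsum D x y (insert a A) (\<lambda>i. g i j))"
  proof (rule hsum_cong)
    fix j assume "j \<in> B"
    then show "Addm D x y (g a j) (hsum D x y A (\<lambda>i. g i j)) = hsum D x y (insert a A) (\<lambda>i. g i j)"
      using insert assms by (subst hsum_insert) auto
  qed (use assms in auto)
  finally show ?case .
qed

lemma hsum_cmp_l:
  assumes "x \<in> Ob D" "y \<in> Ob D" "z \<in> Ob D" "finite S" "\<And>i. i \<in> S \<Longrightarrow> g i \<in> Hom D y z" "f \<in> Hom D x y"
  shows "Cmp D x y z (hsum D y z S g) f = hsum D x z S (\<lambda>i. Cmp D x y z (g i) f)"
  by (rule hsum_map[where h="\<lambda>u. Cmp D x y z u f"]) (use assms in \<open>auto simp: cmp_add_l\<close>)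

lemma hsum_cmp_r:
  assumes "x \<in> Ob D" "y \<in> Ob D" "z \<in> Ob D" "finite S" "\<And>i. i \<in> S \<Longrightarrow> f i \<in> Hom D x y" "g \<in> Hom D y z"
  shows "Cmp D x y z g (hsum D x y S f) = hsum D x z S (\<lambda>i. Cmp D x y z g (f i))"
  by (rule hsum_map[where h="\<lambda>u. Cmp D x y z g u"]) (use assms in \<open>auto simp: cmp_add_r\<close>)

lemma hsum_smul:
  assumes "x \<in> Ob D" "y \<in> Ob D" "finite S" "\<And>i. i \<in> S \<Longrightarrow> f i \<in> Hom D x y"
  shows "Smul D x y a (hsum D x y S f) = hsum D x y S (\<lambda>i. Smul D x y a (f i))"
  by (rule hsum_map[where h="\<lambda>u. Smul D x y a u"]) (use assms in \<open>auto simp: smul_add\<close>)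

end

lemma functor_zero:
  assumes "lin_cat D" "Zerom C x y \<in> Hom C x y" "Addm C x y (Zerom C x y) (Zerom C x y) = Zerom C x y"
    "Fo x \<in> Ob D" "Fo y \<in> Ob D"
    "\<And>f. f \<in> Hom C x y \<Longrightarrow> Fm x y f \<in> Hom D (Fo x) (Fo y)"
    "\<And>f g. f \<in> Hom C x y \<Longrightarrow> g \<in> Hom C x y \<Longrightarrow>
        Fm x y (Addm C x y f g) = Addm D (Fo x) (Fo y) (Fm x y f) (Fm x y g)"
  shows "Fm x y (Zerom C x y) = Zerom D (Fo x) (Fo y)"
proof -
  interpret D: lcat D by (rule lcat.intro) fact
  show ?thesis
    by (rule D.add_idem_zero) (use assms in \<open>auto simp flip: assms(7)\<close>)
qed

lemma functor_hsum:
  assumes "lin_cat D" "Zerom C x y \<in> Hom C x y" "Addm C x y (Zerom C x y) (Zerom C x y) = Zerom C x y"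
    "Fo x \<in> Ob D" "Fo y \<in> Ob D"
    "\<And>f. f \<in> Hom C x y \<Longrightarrow> Fm x y f \<in> Hom D (Fo x) (Fo y)"
    "\<And>f g. f \<in> Hom C x y \<Longrightarrow> g \<in> Hom C x y \<Longrightarrow> Addm C x y f g \<in> Hom C x y"
    "\<And>f g. f \<in> Hom C x y \<Longrightarrow> g \<in> Hom C x y \<Longrightarrow>
        Fm x y (Addm C x y f g) = Addm D (Fo x) (Fo y) (Fm x y f) (Fm x y g)"
     "finite S" "\<And>i. i \<in> S \<Longrightarrow> g i \<in> Hom C x y"
  shows "Fm x y (hsum C x y S g) = hsum D (Fo x) (Fo y) S (\<lambda>i. Fm x y (g i))"
proof -
  have z: "Fm x y (Zerom C x y) = Zerom D (Fo x) (Fo y)"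
    by (rule functor_zero[where C=C]) (use assms in auto)
  show ?thesis
    by (rule hsum_map[where h="Fm x y"]) (use assms z in auto)
qed



lemmas LF = lin_functor_def[THEN iffD1]
lemma LF_ob: "lin_functor C D Fo Fm \<Longrightarrow> x \<in> Ob C \<Longrightarrow> Fo x \<in> Ob D"
  by (drule LF[THEN conjunct1]) blast
lemma LF_hom: "lin_functor C D Fo Fm \<Longrightarrow> x \<in> Ob C \<Longrightarrow> y \<in> Ob C \<Longrightarrow> f \<in> Hom C x y \<Longrightarrow> Fm x y f \<in> Hom D (Fo x) (Fo y)"
  by (drule LF[THEN conjunct2, THEN conjunct1]) blast
lemma LF_idm: "lin_functor C D Fo Fm \<Longrightarrow> x \<in> Ob C \<Longrightarrow> Fm x x (Idm C x) = Idm D (Fo x)"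
  by (drule LF[THEN conjunct2, THEN conjunct2, THEN conjunct1]) blast
lemma LF_cmp: "lin_functor C D Fo Fm \<Longrightarrow> x \<in> Ob C \<Longrightarrow> y \<in> Ob C \<Longrightarrow> z \<in> Ob C \<Longrightarrow> f \<in> Hom C x y \<Longrightarrow> g \<in> Hom C y z \<Longrightarrow>
        Fm x z (Cmp C x y z g f) = Cmp D (Fo x) (Fo y) (Fo z) (Fm y z g) (Fm x y f)"
  by (drule LF[THEN conjunct2, THEN conjunct2, THEN conjunct2, THEN conjunct1]) blast
lemma LF_add: "lin_functor C D Fo Fm \<Longrightarrow> x \<in> Ob C \<Longrightarrow> y \<in> Ob C \<Longrightarrow> f \<in> Hom C x y \<Longrightarrow> g \<in> Hom C x y \<Longrightarrow>
        Fm x y (Addm C x y f g) = Addm D (Fo x) (Fo y) (Fm x y f) (Fm x y g)"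
  by (drule LF[THEN conjunct2, THEN conjunct2, THEN conjunct2, THEN conjunct2, THEN conjunct1]) blast
lemma LF_smul: "lin_functor C D Fo Fm \<Longrightarrow> x \<in> Ob C \<Longrightarrow> y \<in> Ob C \<Longrightarrow> f \<in> Hom C x y \<Longrightarrow>
        Fm x y (Smul C x y a f) = Smul D (Fo x) (Fo y) a (Fm x y f)"
  by (drule LF[THEN conjunct2, THEN conjunct2, THEN conjunct2, THEN conjunct2, THEN conjunct2]) blast

locale gc =
  fixes C :: "('o, 'm, 'k::comm_ring_1) lcat" and G :: "'g monoid"
    and Ao :: "'g \<Rightarrow> 'o \<Rightarrow> 'o" and Am :: "'g \<Rightarrow> 'o \<Rightarrow> 'o \<Rightarrow> 'm \<Rightarrow> 'm"
  assumes gcat: "gcat C G Ao Am"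
begin

lemmas GC = gcat[unfolded gcat_def]
lemma grp: "group G" using GC[THEN conjunct1] .
lemma linC: "lin_cat C" using GC[THEN conjunct2, THEN conjunct1] .

sublocale lcat C by (rule lcat.intro) (rule linC)
sublocale G: group G by (rule grp)

lemmas GC3 = GC[THEN conjunct2, THEN conjunct2, THEN conjunct1]
lemmas GC4 = GC[THEN conjunct2, THEN conjunct2, THEN conjunct2]
lemmas GC4_1 = GC4[THEN conjunct1]
lemmas GC4_2 = GC4[THEN conjunct2, THEN conjunct1]
lemmas GC4_3 = GC4[THEN conjunct2, THEN conjunct2, THEN conjunct1]
lemmas GC4_4 = GC4[THEN conjunct2, THEN conjunct2, THEN conjunct2]

lemma Am_functor: "a \<in> carrier G \<Longrightarrow> lin_functor C C (Ao a) (Am a)"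
  using GC3[rule_format, THEN conjunct1] .

lemma Ao_ob[simp,intro]: "a \<in> carrier G \<Longrightarrow> x \<in> Ob C \<Longrightarrow> Ao a x \<in> Ob C"
  by (rule LF_ob[OF Am_functor]) assumption+
lemma Am_hom[simp,intro]: "\<lbrakk>a \<in> carrier G; x \<in> Ob C; y \<in> Ob C; f \<in> Hom C x y\<rbrakk> \<Longrightarrow> Am a x y f \<in> Hom C (Ao a x) (Ao a y)"
  by (rule LF_hom[OF Am_functor]) assumption+
lemma Am_idm[simp]: "\<lbrakk>a \<in> carrier G; x \<in> Ob C\<rbrakk> \<Longrightarrow> Am a x x (Idm C x) = Idm C (Ao a x)"
  by (rule LF_idm[OF Am_functor]) assumption+
lemma Am_cmp: "\<lbrakk>a \<in> carrier G; x \<in> Ob C; y \<in> Ob C; z \<in> Ob C; f \<in> Hom C x y; g \<in> Hom C y z\<rbrakk> \<Longrightarrow>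
   Am a x z (Cmp C x y z g f) = Cmp C (Ao a x) (Ao a y) (Ao a z) (Am a y z g) (Am a x y f)"
  by (rule LF_cmp[OF Am_functor]) assumption+
lemma Am_add: "\<lbrakk>a \<in> carrier G; x \<in> Ob C; y \<in> Ob C; f \<in> Hom C x y; g \<in> Hom C x y\<rbrakk> \<Longrightarrow>
   Am a x y (Addm C x y f g) = Addm C (Ao a x) (Ao a y) (Am a x y f) (Am a x y g)"
  by (rule LF_add[OF Am_functor]) assumption+
lemma Am_smul: "\<lbrakk>a \<in> carrier G; x \<in> Ob C; y \<in> Ob C; f \<in> Hom C x y\<rbrakk> \<Longrightarrow>
   Am a x y (Smul C x y k f) = Smul C (Ao a x) (Ao a y) k (Am a x y f)"
  by (rule LF_smul[OF Am_functor]) assumption+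
lemma Am_zero[simp]: "\<lbrakk>a \<in> carrier G; x \<in> Ob C; y \<in> Ob C\<rbrakk> \<Longrightarrow> Am a x y (Zerom C x y) = Zerom C (Ao a x) (Ao a y)"
  by (rule functor_zero[where C=C]) (auto simp: Am_add linC)

lemma Ao_one[simp]: "x \<in> Ob C \<Longrightarrow> Ao \<one>\<^bsub>G\<^esub> x = x"
  using GC4_1 by blast
lemma Am_one[simp]: "\<lbrakk>x \<in> Ob C; y \<in> Ob C; f \<in> Hom C x y\<rbrakk> \<Longrightarrow> Am \<one>\<^bsub>G\<^esub> x y f = f"
  using GC4_2 by blast
lemma Ao_mult[simp]: "\<lbrakk>a \<in> carrier G; b \<in> carrier G; x \<in> Ob C\<rbrakk> \<Longrightarrow> Ao (b \<otimes>\<^bsub>G\<^esub> a) x = Ao b (Ao a x)"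
  using GC4_3 by blast
lemma Am_mult[simp]: "\<lbrakk>a \<in> carrier G; b \<in> carrier G; x \<in> Ob C; y \<in> Ob C; f \<in> Hom C x y\<rbrakk> \<Longrightarrow>
   Am (b \<otimes>\<^bsub>G\<^esub> a) x y f = Am b (Ao a x) (Ao a y) (Am a x y f)"
  using GC4_4 by blast

lemma Ao_inv1[simp]: "\<lbrakk>a \<in> carrier G; x \<in> Ob C\<rbrakk> \<Longrightarrow> Ao (inv\<^bsub>G\<^esub> a) (Ao a x) = x"
  by (metis Ao_mult Ao_one G.inv_closed G.l_inv)
lemma Ao_inv2[simp]: "\<lbrakk>a \<in> carrier G; x \<in> Ob C\<rbrakk> \<Longrightarrow> Ao a (Ao (inv\<^bsub>G\<^esub> a) x) = x"
  by (metis Ao_mult Ao_one G.inv_closed G.r_inv)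
lemma Am_inv1[simp]: "\<lbrakk>a \<in> carrier G; x \<in> Ob C; y \<in> Ob C; f \<in> Hom C x y\<rbrakk> \<Longrightarrow>
    Am (inv\<^bsub>G\<^esub> a) (Ao a x) (Ao a y) (Am a x y f) = f"
  by (metis Am_mult Am_one G.inv_closed G.l_inv)

lemma Am_eq_zero: "\<lbrakk>a \<in> carrier G; x \<in> Ob C; y \<in> Ob C; f \<in> Hom C x y\<rbrakk> \<Longrightarrow>
    Am a x y f = Zerom C (Ao a x) (Ao a y) \<longleftrightarrow> f = Zerom C x y"
  by (metis Am_inv1 Am_zero Ao_inv1 Ao_ob G.inv_closed)

abbreviation CG where "CG \<equiv> orbit_cat C G Ao Am"

lemma CG_simps:
  "Ob CG = Ob C"
  "Cmp CG x y z g f = restrict (\<lambda>(b, a).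
              hsum C (Ao a x) (Ao b z) {c\<in>carrier G. f (c, a) \<noteq> Zerom C (Ao a x) (Ao c y)}
                (\<lambda>c. Cmp C (Ao a x) (Ao c y) (Ao b z) (g (b, c)) (f (c, a))))
              (carrier G \<times> carrier G)"
  "Idm CG x = restrict (\<lambda>(b, a). if a = b then Idm C (Ao a x) else Zerom C (Ao a x) (Ao b x))
              (carrier G \<times> carrier G)"
  "Addm CG x y f g = restrict (\<lambda>(b, a). Addm C (Ao a x) (Ao b y) (f (b, a)) (g (b, a)))
              (carrier G \<times> carrier G)"
  "Zerom CG x y = restrict (\<lambda>(b, a). Zerom C (Ao a x) (Ao b y)) (carrier G \<times> carrier G)"
  "Smul CG x y k f = restrict (\<lambda>(b, a). Smul C (Ao a x) (Ao b y) k (f (b, a)))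
              (carrier G \<times> carrier G)"
  by (simp_all add: orbit_cat_def)

lemma HomCG: "f \<in> Hom CG x y \<longleftrightarrow> f \<in> extensional (carrier G \<times> carrier G) \<and>
              (\<forall>b\<in>carrier G. \<forall>a\<in>carrier G. f (b, a) \<in> Hom C (Ao a x) (Ao b y)) \<and>
              (\<forall>c\<in>carrier G. \<forall>b\<in>carrier G. \<forall>a\<in>carrier G.
                  f (c \<otimes>\<^bsub>G\<^esub> b, c \<otimes>\<^bsub>G\<^esub> a) = Am c (Ao a x) (Ao b y) (f (b, a))) \<and>
              (\<forall>b\<in>carrier G. finite {a\<in>carrier G. f (b, a) \<noteq> Zerom C (Ao a x) (Ao b y)}) \<and>
              (\<forall>a\<in>carrier G. finite {b\<in>carrier G. f (b, a) \<noteq> Zerom C (Ao a x) (Ao b y)})"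
  by (simp add: orbit_cat_def)

lemma HomCG_ext: "f \<in> Hom CG x y \<Longrightarrow> f \<in> extensional (carrier G \<times> carrier G)"
  using HomCG by blast
lemma HomCG_hom[simp,intro]: "f \<in> Hom CG x y \<Longrightarrow> b \<in> carrier G \<Longrightarrow> a \<in> carrier G \<Longrightarrow> f (b, a) \<in> Hom C (Ao a x) (Ao b y)"
  using HomCG by blast
lemma HomCG_eqv: "f \<in> Hom CG x y \<Longrightarrow> c \<in> carrier G \<Longrightarrow> b \<in> carrier G \<Longrightarrow> a \<in> carrier G \<Longrightarrow>
   f (c \<otimes>\<^bsub>G\<^esub> b, c \<otimes>\<^bsub>G\<^esub> a) = Am c (Ao a x) (Ao b y) (f (b, a))"
  using HomCG by blast
lemma HomCG_row: "f \<in> Hom CG x y \<Longrightarrow> b \<in> carrier G \<Longrightarrow> finite {a\<in>carrier G. f (b, a) \<noteq> Zerom C (Ao a x) (Ao b y)}"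
  using HomCG by blast
lemma HomCG_col: "f \<in> Hom CG x y \<Longrightarrow> a \<in> carrier G \<Longrightarrow> finite {b\<in>carrier G. f (b, a) \<noteq> Zerom C (Ao a x) (Ao b y)}"
  using HomCG by blast

lemma HomCG_hom1[simp,intro]: "f \<in> Hom CG x y \<Longrightarrow> x \<in> Ob C \<Longrightarrow> b \<in> carrier G \<Longrightarrow> f (b, \<one>\<^bsub>G\<^esub>) \<in> Hom C x (Ao b y)"
  using HomCG_hom[of f x y b "\<one>\<^bsub>G\<^esub>"] by simp

lemma HomCG_col1: "f \<in> Hom CG x y \<Longrightarrow> x \<in> Ob C \<Longrightarrow> finite {b\<in>carrier G. f (b, \<one>\<^bsub>G\<^esub>) \<noteq> Zerom C x (Ao b y)}"
  using HomCG_col[of f x y "\<one>\<^bsub>G\<^esub>"] by simp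

lemma HomCG_col1_eq: "f \<in> Hom CG x y \<Longrightarrow> x \<in> Ob C \<Longrightarrow> y \<in> Ob C \<Longrightarrow> b \<in> carrier G \<Longrightarrow> a \<in> carrier G \<Longrightarrow>
   f (b, a) = Am a x (Ao (inv\<^bsub>G\<^esub> a \<otimes>\<^bsub>G\<^esub> b) y) (f (inv\<^bsub>G\<^esub> a \<otimes>\<^bsub>G\<^esub> b, \<one>\<^bsub>G\<^esub>))"
  using HomCG_eqv[of f x y a "inv\<^bsub>G\<^esub> a \<otimes>\<^bsub>G\<^esub> b" "\<one>\<^bsub>G\<^esub>"]
  by (simp add: G.m_assoc[symmetric])

end


context gc
begin

lemma foldr_CG_eval:
  assumes "b \<in> carrier G" "a \<in> carrier G"
  shows "foldr (\<lambda>i acc. Addm CG x y (g i) acc) xs (Zerom CG x y) (b, a) =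
         foldr (\<lambda>i acc. Addm C (Ao a x) (Ao b y) (g i (b, a)) acc) xs (Zerom C (Ao a x) (Ao b y))"
  using assms by (induction xs) (simp_all add: CG_simps)

lemma hsum_CG_eval:
  assumes "b \<in> carrier G" "a \<in> carrier G"
  shows "hsum CG x y S g (b, a) = hsum C (Ao a x) (Ao b y) S (\<lambda>i. g i (b, a))"
  using foldr_CG_eval[OF assms] by (simp add: hsum_lst)

lemma zero_CG_hom[simp,intro]: "x \<in> Ob C \<Longrightarrow> y \<in> Ob C \<Longrightarrow> Zerom CG x y \<in> Hom CG x y"
  by (auto simp: HomCG CG_simps simp flip: Ao_mult)

lemma zero_CG_idem: "x \<in> Ob C \<Longrightarrow> y \<in> Ob C \<Longrightarrow> Addm CG x y (Zerom CG x y) (Zerom CG x y) = Zerom CG x y"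
  by (auto simp: CG_simps intro!: restrict_ext)

lemma add_CG_hom[simp,intro]:
  assumes "x \<in> Ob C" "y \<in> Ob C" "f \<in> Hom CG x y" "g \<in> Hom CG x y"
  shows "Addm CG x y f g \<in> Hom CG x y"
proof -
  have eq: "Addm C (Ao a x) (Ao b y) (f (b, a)) (g (b, a)) = Zerom C (Ao a x) (Ao b y)"
    if "b \<in> carrier G" "a \<in> carrier G" "f (b, a) = Zerom C (Ao a x) (Ao b y)" "g (b, a) = Zerom C (Ao a x) (Ao b y)" for a b
    using that assms by simp
  show ?thesis unfolding HomCG
  proof (intro conjI ballI)
    show "Addm CG x y f g \<in> extensional (carrier G \<times> carrier G)" by (simp add: CG_simps)
  next
    fix b a assume "b \<in> carrier G" "a \<in> carrier G"
    then show "Addm CG x y f g (b, a) \<in> Hom C (Ao a x) (Ao b y)" using assms by (simp add: CG_simps)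
  next
    fix c b a assume ba: "c \<in> carrier G" "b \<in> carrier G" "a \<in> carrier G"
    then show "Addm CG x y f g (c \<otimes>\<^bsub>G\<^esub> b, c \<otimes>\<^bsub>G\<^esub> a) = Am c (Ao a x) (Ao b y) (Addm CG x y f g (b, a))"
      using assms by (simp add: CG_simps HomCG_eqv Am_add)
  next
    fix b assume b: "b \<in> carrier G"
    have "{a \<in> carrier G. Addm CG x y f g (b, a) \<noteq> Zerom C (Ao a x) (Ao b y)} \<subseteq>
       {a \<in> carrier G. f (b, a) \<noteq> Zerom C (Ao a x) (Ao b y)} \<union> {a \<in> carrier G. g (b, a) \<noteq> Zerom C (Ao a x) (Ao b y)}"
      using b eq by (auto simp: CG_simps)
    then show "finite {a \<in> carrier G. Addm CG x y f g (b, a) \<noteq> Zerom C (Ao a x) (Ao b y)}"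
      using HomCG_row[OF assms(3) b] HomCG_row[OF assms(4) b] by (meson finite_Un finite_subset)
  next
    fix a assume a: "a \<in> carrier G"
    have "{b \<in> carrier G. Addm CG x y f g (b, a) \<noteq> Zerom C (Ao a x) (Ao b y)} \<subseteq>
       {b \<in> carrier G. f (b, a) \<noteq> Zerom C (Ao a x) (Ao b y)} \<union> {b \<in> carrier G. g (b, a) \<noteq> Zerom C (Ao a x) (Ao b y)}"
      using a eq by (auto simp: CG_simps)
    then show "finite {b \<in> carrier G. Addm CG x y f g (b, a) \<noteq> Zerom C (Ao a x) (Ao b y)}"
      using HomCG_col[OF assms(3) a] HomCG_col[OF assms(4) a] by (meson finite_Un finite_subset)
  qed
qed

lemma smul_CG_hom[simp,intro]:
  assumes "x \<in> Ob C" "y \<in> Ob C" "f \<in> Hom CG x y"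
  shows "Smul CG x y k f \<in> Hom CG x y"
proof -
  have eq: "Smul C (Ao a x) (Ao b y) k (f (b, a)) = Zerom C (Ao a x) (Ao b y)"
    if "b \<in> carrier G" "a \<in> carrier G" "f (b, a) = Zerom C (Ao a x) (Ao b y)" for a b
    using that assms by simp
  show ?thesis unfolding HomCG
  proof (intro conjI ballI)
    show "Smul CG x y k f \<in> extensional (carrier G \<times> carrier G)" by (simp add: CG_simps)
  next
    fix b a assume "b \<in> carrier G" "a \<in> carrier G"
    then show "Smul CG x y k f (b, a) \<in> Hom C (Ao a x) (Ao b y)" using assms by (simp add: CG_simps)
  next
    fix c b a assume ba: "c \<in> carrier G" "b \<in> carrier G" "a \<in> carrier G"
    then show "Smul CG x y k f (c \<otimes>\<^bsub>G\<^esub> b, c \<otimes>\<^bsub>G\<^esub> a) = Am c (Ao a x) (Ao b y) (Smul CG x y k f (b, a))"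
      using assms by (simp add: CG_simps HomCG_eqv Am_smul)
  next
    fix b assume b: "b \<in> carrier G"
    have "{a \<in> carrier G. Smul CG x y k f (b, a) \<noteq> Zerom C (Ao a x) (Ao b y)} \<subseteq>
       {a \<in> carrier G. f (b, a) \<noteq> Zerom C (Ao a x) (Ao b y)}"
      using b eq by (auto simp: CG_simps)
    then show "finite {a \<in> carrier G. Smul CG x y k f (b, a) \<noteq> Zerom C (Ao a x) (Ao b y)}"
      using HomCG_row[OF assms(3) b] by (meson finite_subset)
  next
    fix a assume a: "a \<in> carrier G"
    have "{b \<in> carrier G. Smul CG x y k f (b, a) \<noteq> Zerom C (Ao a x) (Ao b y)} \<subseteq>
       {b \<in> carrier G. f (b, a) \<noteq> Zerom C (Ao a x) (Ao b y)}"
      using a eq by (auto simp: CG_simps)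
    then show "finite {b \<in> carrier G. Smul CG x y k f (b, a) \<noteq> Zerom C (Ao a x) (Ao b y)}"
      using HomCG_col[OF assms(3) a] by (meson finite_subset)
  qed
qed

lemma idm_CG_hom[simp,intro]:
  assumes "x \<in> Ob C"
  shows "Idm CG x \<in> Hom CG x x"
  unfolding HomCG
proof (intro conjI ballI)
  show "Idm CG x \<in> extensional (carrier G \<times> carrier G)" by (simp add: CG_simps)
next
  fix b a assume "b \<in> carrier G" "a \<in> carrier G"
  then show "Idm CG x (b, a) \<in> Hom C (Ao a x) (Ao b x)" using assms by (simp add: CG_simps)
next
  fix c b a assume ba: "c \<in> carrier G" "b \<in> carrier G" "a \<in> carrier G"
  then show "Idm CG x (c \<otimes>\<^bsub>G\<^esub> b, c \<otimes>\<^bsub>G\<^esub> a) = Am c (Ao a x) (Ao b x) (Idm CG x (b, a))"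
    using assms by (auto simp: CG_simps)
next
  fix b assume b: "b \<in> carrier G"
  have "{a \<in> carrier G. Idm CG x (b, a) \<noteq> Zerom C (Ao a x) (Ao b x)} \<subseteq> {b}"
    using b by (auto simp: CG_simps)
  then show "finite {a \<in> carrier G. Idm CG x (b, a) \<noteq> Zerom C (Ao a x) (Ao b x)}"
    by (meson finite.emptyI finite.insertI finite_subset)
next
  fix a assume a: "a \<in> carrier G"
  have "{b \<in> carrier G. Idm CG x (b, a) \<noteq> Zerom C (Ao a x) (Ao b x)} \<subseteq> {a}"
    using a by (auto simp: CG_simps)
  then show "finite {b \<in> carrier G. Idm CG x (b, a) \<noteq> Zerom C (Ao a x) (Ao b x)}"
    by (meson finite.emptyI finite.insertI finite_subset)
qed

lemma canP_eval: "b \<in> carrier G \<Longrightarrow> a \<in> carrier G \<Longrightarrow>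
   canP_mor C G Ao Am x y f (b, a) = (if a = b then Am a x y f else Zerom C (Ao a x) (Ao b y))"
  by (simp add: canP_mor_def)

lemma canPphi_eval: "b \<in> carrier G \<Longrightarrow> a \<in> carrier G \<Longrightarrow>
   canP_phi C G Ao m x (b, a) = (if a = b \<otimes>\<^bsub>G\<^esub> m then Idm C (Ao a x) else Zerom C (Ao a x) (Ao b (Ao m x)))"
  by (simp add: canP_phi_def)

lemma canP_hom[simp,intro]:
  assumes "x \<in> Ob C" "y \<in> Ob C" "f \<in> Hom C x y"
  shows "canP_mor C G Ao Am x y f \<in> Hom CG x y"
  unfolding HomCG
proof (intro conjI ballI)
  show "canP_mor C G Ao Am x y f \<in> extensional (carrier G \<times> carrier G)" by (simp add: canP_mor_def)
next
  fix b a assume "b \<in> carrier G" "a \<in> carrier G"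
  then show "canP_mor C G Ao Am x y f (b, a) \<in> Hom C (Ao a x) (Ao b y)" using assms by (simp add: canP_eval)
next
  fix c b a assume ba: "c \<in> carrier G" "b \<in> carrier G" "a \<in> carrier G"
  then show "canP_mor C G Ao Am x y f (c \<otimes>\<^bsub>G\<^esub> b, c \<otimes>\<^bsub>G\<^esub> a) = Am c (Ao a x) (Ao b y) (canP_mor C G Ao Am x y f (b, a))"
    using assms by (auto simp: canP_eval)
next
  fix b assume b: "b \<in> carrier G"
  have "{a \<in> carrier G. canP_mor C G Ao Am x y f (b, a) \<noteq> Zerom C (Ao a x) (Ao b y)} \<subseteq> {b}"
    using b by (auto simp: canP_eval split: if_splits)
  then show "finite {a \<in> carrier G. canP_mor C G Ao Am x y f (b, a) \<noteq> Zerom C (Ao a x) (Ao b y)}"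
    by (meson finite.emptyI finite.insertI finite_subset)
next
  fix a assume a: "a \<in> carrier G"
  have "{b \<in> carrier G. canP_mor C G Ao Am x y f (b, a) \<noteq> Zerom C (Ao a x) (Ao b y)} \<subseteq> {a}"
    using a by (auto simp: canP_eval split: if_splits)
  then show "finite {b \<in> carrier G. canP_mor C G Ao Am x y f (b, a) \<noteq> Zerom C (Ao a x) (Ao b y)}"
    by (meson finite.emptyI finite.insertI finite_subset)
qed

lemma canPphi_hom[simp,intro]:
  assumes "x \<in> Ob C" "m \<in> carrier G"
  shows "canP_phi C G Ao m x \<in> Hom CG x (Ao m x)"
  unfolding HomCG
proof (intro conjI ballI)
  show "canP_phi C G Ao m x \<in> extensional (carrier G \<times> carrier G)" by (simp add: canP_phi_def)
next
  fix b a assume "b \<in> carrier G" "a \<in> carrier G"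
  then show "canP_phi C G Ao m x (b, a) \<in> Hom C (Ao a x) (Ao b (Ao m x))" using assms by (auto simp: canPphi_eval)
next
  fix c b a assume ba: "c \<in> carrier G" "b \<in> carrier G" "a \<in> carrier G"
  then show "canP_phi C G Ao m x (c \<otimes>\<^bsub>G\<^esub> b, c \<otimes>\<^bsub>G\<^esub> a) = Am c (Ao a x) (Ao b (Ao m x)) (canP_phi C G Ao m x (b, a))"
    using assms by (auto simp: canPphi_eval G.m_assoc)
next
  fix b assume b: "b \<in> carrier G"
  have "{a \<in> carrier G. canP_phi C G Ao m x (b, a) \<noteq> Zerom C (Ao a x) (Ao b (Ao m x))} \<subseteq> {b \<otimes>\<^bsub>G\<^esub> m}"
    using b by (auto simp: canPphi_eval split: if_splits)
  then show "finite {a \<in> carrier G. canP_phi C G Ao m x (b, a) \<noteq> Zerom C (Ao a x) (Ao b (Ao m x))}"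
    by (meson finite.emptyI finite.insertI finite_subset)
next
  fix a assume a: "a \<in> carrier G"
  have "{b \<in> carrier G. canP_phi C G Ao m x (b, a) \<noteq> Zerom C (Ao a x) (Ao b (Ao m x))} \<subseteq> {a \<otimes>\<^bsub>G\<^esub> inv\<^bsub>G\<^esub> m}"
    using a assms by (auto simp: canPphi_eval G.m_assoc split: if_splits)
  then show "finite {b \<in> carrier G. canP_phi C G Ao m x (b, a) \<noteq> Zerom C (Ao a x) (Ao b (Ao m x))}"
    by (meson finite.emptyI finite.insertI finite_subset)
qed


lemma lcancel[simp]: "a \<in> carrier G \<Longrightarrow> b \<in> carrier G \<Longrightarrow> c \<in> carrier G \<Longrightarrow> a \<otimes>\<^bsub>G\<^esub> b = a \<otimes>\<^bsub>G\<^esub> c \<longleftrightarrow> b = c"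
  by (metis G.Units_eq G.Units_l_cancel)

lemma cmpCG_eval: "b \<in> carrier G \<Longrightarrow> a \<in> carrier G \<Longrightarrow>
  Cmp CG x y z g f (b, a) = hsum C (Ao a x) (Ao b z) {c\<in>carrier G. f (c, a) \<noteq> Zerom C (Ao a x) (Ao c y)}
                (\<lambda>c. Cmp C (Ao a x) (Ao c y) (Ao b z) (g (b, c)) (f (c, a)))"
  by (simp add: CG_simps)

lemma cmpCG_nonzero:
  assumes "x \<in> Ob C" "y \<in> Ob C" "z \<in> Ob C" "f \<in> Hom CG x y" "g \<in> Hom CG y z" "b \<in> carrier G" "a \<in> carrier G"
    "Cmp CG x y z g f (b, a) \<noteq> Zerom C (Ao a x) (Ao b z)"
  shows "\<exists>c\<in>carrier G. f (c, a) \<noteq> Zerom C (Ao a x) (Ao c y) \<and> g (b, c) \<noteq> Zerom C (Ao c y) (Ao b z)"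
proof (rule ccontr)
  assume "\<not> ?thesis"
  then have "Cmp CG x y z g f (b, a) = Zerom C (Ao a x) (Ao b z)"
    using assms by (subst cmpCG_eval) (auto intro!: hsum_zero HomCG_col)
  then show False using assms by blast
qed

lemma cmpCG_eval1:
  assumes "x \<in> Ob C" "y \<in> Ob C" "z \<in> Ob C" "f \<in> Hom CG x y" "g \<in> Hom CG y z" "b \<in> carrier G" "a \<in> carrier G"
    "c0 \<in> carrier G" "\<And>c. c \<in> carrier G \<Longrightarrow> c \<noteq> c0 \<Longrightarrow> f (c, a) = Zerom C (Ao a x) (Ao c y)"
  shows "Cmp CG x y z g f (b, a) = Cmp C (Ao a x) (Ao c0 y) (Ao b z) (g (b, c0)) (f (c0, a))"
proof -
  have "hsum C (Ao a x) (Ao b z) {c\<in>carrier G. f (c, a) \<noteq> Zerom C (Ao a x) (Ao c y)}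
                (\<lambda>c. Cmp C (Ao a x) (Ao c y) (Ao b z) (g (b, c)) (f (c, a))) =
        hsum C (Ao a x) (Ao b z) {c0} (\<lambda>c. Cmp C (Ao a x) (Ao c y) (Ao b z) (g (b, c)) (f (c, a)))"
    by (rule hsum_neutral) (use assms HomCG_col[OF assms(4,7)] in auto)
  then show ?thesis using assms by (simp add: cmpCG_eval)
qed

lemma cmp_CG_hom[simp,intro]:
  assumes x: "x \<in> Ob C" and y: "y \<in> Ob C" and z: "z \<in> Ob C" and f: "f \<in> Hom CG x y" and g: "g \<in> Hom CG y z"
  shows "Cmp CG x y z g f \<in> Hom CG x z"
  unfolding HomCG
proof (intro conjI ballI)
  show "Cmp CG x y z g f \<in> extensional (carrier G \<times> carrier G)" by (simp add: CG_simps)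
next
  fix b a assume "b \<in> carrier G" "a \<in> carrier G"
  then show "Cmp CG x y z g f (b, a) \<in> Hom C (Ao a x) (Ao b z)"
    using assms by (subst cmpCG_eval) (auto intro!: hsum_hom HomCG_col)
next
  fix d b a assume d: "d \<in> carrier G" and b: "b \<in> carrier G" and a: "a \<in> carrier G"
  let ?S = "\<lambda>a. {c\<in>carrier G. f (c, a) \<noteq> Zerom C (Ao a x) (Ao c y)}"
  have fin: "finite (?S a)" using HomCG_col[OF f a] .
  have setS: "?S (d \<otimes>\<^bsub>G\<^esub> a) = (\<lambda>c. d \<otimes>\<^bsub>G\<^esub> c) ` ?S a"
  proof (rule equalityI; rule subsetI)
    fix e assume e: "e \<in> ?S (d \<otimes>\<^bsub>G\<^esub> a)"
    define c where "c = inv\<^bsub>G\<^esub> d \<otimes>\<^bsub>G\<^esub> e"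
    have c: "c \<in> carrier G" "e = d \<otimes>\<^bsub>G\<^esub> c" using d e by (auto simp: c_def G.m_assoc[symmetric])
    have "f (d \<otimes>\<^bsub>G\<^esub> c, d \<otimes>\<^bsub>G\<^esub> a) = Am d (Ao a x) (Ao c y) (f (c, a))"
      using HomCG_eqv[OF f d c(1) a] .
    then have "f (c, a) \<noteq> Zerom C (Ao a x) (Ao c y)"
      using e c d a x y by (auto simp: Am_eq_zero)
    then show "e \<in> (\<lambda>c. d \<otimes>\<^bsub>G\<^esub> c) ` ?S a" using c by blast
  next
    fix e assume "e \<in> (\<lambda>c. d \<otimes>\<^bsub>G\<^esub> c) ` ?S a"
    then obtain c where c: "c \<in> ?S a" "e = d \<otimes>\<^bsub>G\<^esub> c" by blast
    have "f (d \<otimes>\<^bsub>G\<^esub> c, d \<otimes>\<^bsub>G\<^esub> a) = Am d (Ao a x) (Ao c y) (f (c, a))"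
      using HomCG_eqv[OF f d _ a] c by blast
    then show "e \<in> ?S (d \<otimes>\<^bsub>G\<^esub> a)"
      using c d a x y f by (auto simp: Am_eq_zero)
  qed
  have inj: "inj_on (\<lambda>c. d \<otimes>\<^bsub>G\<^esub> c) (?S a)" using d by (auto simp: inj_on_def)
  have "Cmp CG x y z g f (d \<otimes>\<^bsub>G\<^esub> b, d \<otimes>\<^bsub>G\<^esub> a) =
     hsum C (Ao d (Ao a x)) (Ao d (Ao b z)) ((\<lambda>c. d \<otimes>\<^bsub>G\<^esub> c) ` ?S a)
       (\<lambda>e. Cmp C (Ao d (Ao a x)) (Ao e y) (Ao d (Ao b z)) (g (d \<otimes>\<^bsub>G\<^esub> b, e)) (f (e, d \<otimes>\<^bsub>G\<^esub> a)))"
    using d b a x z by (subst cmpCG_eval) (simp_all add: setS[symmetric])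
  also have "\<dots> = hsum C (Ao d (Ao a x)) (Ao d (Ao b z)) (?S a)
       (\<lambda>c. Cmp C (Ao d (Ao a x)) (Ao (d \<otimes>\<^bsub>G\<^esub> c) y) (Ao d (Ao b z)) (g (d \<otimes>\<^bsub>G\<^esub> b, d \<otimes>\<^bsub>G\<^esub> c)) (f (d \<otimes>\<^bsub>G\<^esub> c, d \<otimes>\<^bsub>G\<^esub> a)))"
  proof -
    have cl: "\<And>c. c \<in> ?S a \<Longrightarrow> Cmp C (Ao d (Ao a x)) (Ao (d \<otimes>\<^bsub>G\<^esub> c) y) (Ao d (Ao b z)) (g (d \<otimes>\<^bsub>G\<^esub> b, d \<otimes>\<^bsub>G\<^esub> c)) (f (d \<otimes>\<^bsub>G\<^esub> c, d \<otimes>\<^bsub>G\<^esub> a)) \<in> Hom C (Ao d (Ao a x)) (Ao d (Ao b z))"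
    proof -
      fix c assume c: "c \<in> ?S a"
      have "g (d \<otimes>\<^bsub>G\<^esub> b, d \<otimes>\<^bsub>G\<^esub> c) \<in> Hom C (Ao (d \<otimes>\<^bsub>G\<^esub> c) y) (Ao (d \<otimes>\<^bsub>G\<^esub> b) z)"
        "f (d \<otimes>\<^bsub>G\<^esub> c, d \<otimes>\<^bsub>G\<^esub> a) \<in> Hom C (Ao (d \<otimes>\<^bsub>G\<^esub> a) x) (Ao (d \<otimes>\<^bsub>G\<^esub> c) y)"
        using c d b a f g by (auto intro!: HomCG_hom)
      then show "?thesis c" using c d b a x y z by (intro cmp_hom) auto
    qed
    show ?thesis using d b a x y z fin inj cl by (subst hsum_reindex) (auto simp del: Ao_mult)
  qed
  also have "\<dots> = hsum C (Ao d (Ao a x)) (Ao d (Ao b z)) (?S a)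
       (\<lambda>c. Am d (Ao a x) (Ao b z) (Cmp C (Ao a x) (Ao c y) (Ao b z) (g (b, c)) (f (c, a))))"
    using d b a x y z f g fin by (intro hsum_cong) (auto simp: HomCG_eqv Am_cmp)
  also have "\<dots> = Am d (Ao a x) (Ao b z) (hsum C (Ao a x) (Ao b z) (?S a)
       (\<lambda>c. Cmp C (Ao a x) (Ao c y) (Ao b z) (g (b, c)) (f (c, a))))"
    using d b a x y z f g fin by (intro hsum_map[symmetric]) (auto simp: Am_add)
  also have "\<dots> = Am d (Ao a x) (Ao b z) (Cmp CG x y z g f (b, a))"
    using b a by (simp add: cmpCG_eval)
  finally show "Cmp CG x y z g f (d \<otimes>\<^bsub>G\<^esub> b, d \<otimes>\<^bsub>G\<^esub> a) = Am d (Ao a x) (Ao b z) (Cmp CG x y z g f (b, a))" .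
next
  fix b assume b: "b \<in> carrier G"
  let ?R = "{c\<in>carrier G. g (b, c) \<noteq> Zerom C (Ao c y) (Ao b z)}"
  have "{a \<in> carrier G. Cmp CG x y z g f (b, a) \<noteq> Zerom C (Ao a x) (Ao b z)} \<subseteq>
      (\<Union>c\<in>?R. {a\<in>carrier G. f (c, a) \<noteq> Zerom C (Ao a x) (Ao c y)})"
    using cmpCG_nonzero[OF x y z f g b] by blast
  moreover have "finite (\<Union>c\<in>?R. {a\<in>carrier G. f (c, a) \<noteq> Zerom C (Ao a x) (Ao c y)})"
    using HomCG_row[OF g b] HomCG_row[OF f] by blast
  ultimately show "finite {a \<in> carrier G. Cmp CG x y z g f (b, a) \<noteq> Zerom C (Ao a x) (Ao b z)}"
    by (rule finite_subset)
next
  fix a assume a: "a \<in> carrier G"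
  let ?S = "{c\<in>carrier G. f (c, a) \<noteq> Zerom C (Ao a x) (Ao c y)}"
  have "{b \<in> carrier G. Cmp CG x y z g f (b, a) \<noteq> Zerom C (Ao a x) (Ao b z)} \<subseteq>
      (\<Union>c\<in>?S. {b\<in>carrier G. g (b, c) \<noteq> Zerom C (Ao c y) (Ao b z)})"
    using cmpCG_nonzero[OF x y z f g _ a] by blast
  moreover have "finite (\<Union>c\<in>?S. {b\<in>carrier G. g (b, c) \<noteq> Zerom C (Ao c y) (Ao b z)})"
    using HomCG_col[OF f a] HomCG_col[OF g] by blast
  ultimately show "finite {b \<in> carrier G. Cmp CG x y z g f (b, a) \<noteq> Zerom C (Ao a x) (Ao b z)}"
    by (rule finite_subset)
qed

end


context gc
begin

lemma CG_ext:
  assumes "f \<in> extensional (carrier G \<times> carrier G)" "g \<in> extensional (carrier G \<times> carrier G)"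
    "\<And>b a. b \<in> carrier G \<Longrightarrow> a \<in> carrier G \<Longrightarrow> f (b, a) = g (b, a)"
  shows "f = g"
  using assms by (intro extensionalityI[where A="carrier G \<times> carrier G"]) auto

lemma hsum_CG_hom[simp,intro]:
  assumes "x \<in> Ob C" "y \<in> Ob C" "finite S" "\<And>i. i \<in> S \<Longrightarrow> g i \<in> Hom CG x y"
  shows "hsum CG x y S g \<in> Hom CG x y"
proof -
  have "\<forall>i\<in>set xs. g i \<in> Hom CG x y \<Longrightarrow> foldr (\<lambda>i acc. Addm CG x y (g i) acc) xs (Zerom CG x y) \<in> Hom CG x y" for xs
    using assms(1,2) by (induction xs) auto
  then show ?thesis using assms lst[OF assms(3)] by (simp add: hsum_lst)
qed

lemma canP_ext: "canP_mor C G Ao Am x y f \<in> extensional (carrier G \<times> carrier G)"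
  by (simp add: canP_mor_def)
lemma canPphi_ext: "canP_phi C G Ao m x \<in> extensional (carrier G \<times> carrier G)"
  by (simp add: canP_phi_def)
lemma cmpCG_ext: "Cmp CG x y z g f \<in> extensional (carrier G \<times> carrier G)"
  by (simp add: CG_simps)

lemma canP_cmp:
  assumes "x \<in> Ob C" "y \<in> Ob C" "z \<in> Ob C" "f \<in> Hom C x y" "g \<in> Hom C y z"
  shows "Cmp CG x y z (canP_mor C G Ao Am y z g) (canP_mor C G Ao Am x y f) = canP_mor C G Ao Am x z (Cmp C x y z g f)"
proof (rule CG_ext[OF cmpCG_ext canP_ext])
  fix b a assume b: "b \<in> carrier G" and a: "a \<in> carrier G"
  have "Cmp CG x y z (canP_mor C G Ao Am y z g) (canP_mor C G Ao Am x y f) (b, a) =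
     Cmp C (Ao a x) (Ao a y) (Ao b z) (canP_mor C G Ao Am y z g (b, a)) (canP_mor C G Ao Am x y f (a, a))"
    using assms a b by (intro cmpCG_eval1) (auto simp: canP_eval)
  then show "Cmp CG x y z (canP_mor C G Ao Am y z g) (canP_mor C G Ao Am x y f) (b, a) = canP_mor C G Ao Am x z (Cmp C x y z g f) (b, a)"
    using assms a b by (auto simp: canP_eval Am_cmp)
qed

lemma canP_idm:
  assumes "x \<in> Ob C"
  shows "canP_mor C G Ao Am x x (Idm C x) = Idm CG x"
  by (rule CG_ext[OF canP_ext]) (use assms in \<open>auto simp: canP_eval CG_simps\<close>)

lemma canP_add:
  assumes "x \<in> Ob C" "y \<in> Ob C" "f \<in> Hom C x y" "g \<in> Hom C x y"
  shows "canP_mor C G Ao Am x y (Addm C x y f g) = Addm CG x y (canP_mor C G Ao Am x y f) (canP_mor C G Ao Am x y g)"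
  by (rule CG_ext[OF canP_ext]) (use assms in \<open>auto simp: canP_eval CG_simps Am_add\<close>)

lemma canP_smul:
  assumes "x \<in> Ob C" "y \<in> Ob C" "f \<in> Hom C x y"
  shows "canP_mor C G Ao Am x y (Smul C x y k f) = Smul CG x y k (canP_mor C G Ao Am x y f)"
  by (rule CG_ext[OF canP_ext]) (use assms in \<open>auto simp: canP_eval CG_simps Am_smul\<close>)

lemma solve1: "a \<in> carrier G \<Longrightarrow> b \<in> carrier G \<Longrightarrow> d \<in> carrier G \<Longrightarrow> d \<otimes>\<^bsub>G\<^esub> inv\<^bsub>G\<^esub> a = b \<longleftrightarrow> d = b \<otimes>\<^bsub>G\<^esub> a"
  using G.inv_solve_right' by blast
lemma solve2: "a \<in> carrier G \<Longrightarrow> b \<in> carrier G \<Longrightarrow> d \<in> carrier G \<Longrightarrow> b = d \<otimes>\<^bsub>G\<^esub> inv\<^bsub>G\<^esub> a \<longleftrightarrow> d = b \<otimes>\<^bsub>G\<^esub> a"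
  using G.inv_solve_right by blast

lemma phi_nat_CG:
  assumes x: "x \<in> Ob C" and y: "y \<in> Ob C" and f: "f \<in> Hom C x y" and m: "m \<in> carrier G"
  shows "Cmp CG x y (Ao m y) (canP_phi C G Ao m y) (canP_mor C G Ao Am x y f) =
         Cmp CG x (Ao m x) (Ao m y) (canP_mor C G Ao Am (Ao m x) (Ao m y) (Am m x y f)) (canP_phi C G Ao m x)"
proof (rule CG_ext[OF cmpCG_ext cmpCG_ext])
  fix b d assume b: "b \<in> carrier G" and d: "d \<in> carrier G"
  have dm: "d \<otimes>\<^bsub>G\<^esub> inv\<^bsub>G\<^esub> m \<in> carrier G" using d m by simp
  have L: "Cmp CG x y (Ao m y) (canP_phi C G Ao m y) (canP_mor C G Ao Am x y f) (b, d) =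
     Cmp C (Ao d x) (Ao d y) (Ao b (Ao m y)) (canP_phi C G Ao m y (b, d)) (canP_mor C G Ao Am x y f (d, d))"
    using assms b d by (intro cmpCG_eval1) (auto simp: canP_eval)
  have R: "Cmp CG x (Ao m x) (Ao m y) (canP_mor C G Ao Am (Ao m x) (Ao m y) (Am m x y f)) (canP_phi C G Ao m x) (b, d) =
     Cmp C (Ao d x) (Ao (d \<otimes>\<^bsub>G\<^esub> inv\<^bsub>G\<^esub> m) (Ao m x)) (Ao b (Ao m y))
        (canP_mor C G Ao Am (Ao m x) (Ao m y) (Am m x y f) (b, d \<otimes>\<^bsub>G\<^esub> inv\<^bsub>G\<^esub> m))
        (canP_phi C G Ao m x (d \<otimes>\<^bsub>G\<^esub> inv\<^bsub>G\<^esub> m, d))"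
    using assms b d dm by (intro cmpCG_eval1) (auto simp: canPphi_eval solve2)
  show "Cmp CG x y (Ao m y) (canP_phi C G Ao m y) (canP_mor C G Ao Am x y f) (b, d) =
        Cmp CG x (Ao m x) (Ao m y) (canP_mor C G Ao Am (Ao m x) (Ao m y) (Am m x y f)) (canP_phi C G Ao m x) (b, d)"
  proof (cases "d = b \<otimes>\<^bsub>G\<^esub> m")
    case True
    have e: "b \<otimes>\<^bsub>G\<^esub> m \<otimes>\<^bsub>G\<^esub> inv\<^bsub>G\<^esub> m = b" using b m by (simp add: G.m_assoc)
    show ?thesis unfolding L R using True assms b e by (simp add: canP_eval canPphi_eval)
  next
    case False
    then show ?thesis unfolding L R using assms b d dm by (simp add: canP_eval canPphi_eval solve1 G.m_assoc)
  qed
qed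

lemma phi_comp_CG:
  assumes x: "x \<in> Ob C" and a: "a \<in> carrier G" and b: "b \<in> carrier G"
  shows "Cmp CG x (Ao a x) (Ao b (Ao a x)) (canP_phi C G Ao b (Ao a x)) (canP_phi C G Ao a x) = canP_phi C G Ao (b \<otimes>\<^bsub>G\<^esub> a) x"
proof (rule CG_ext[OF cmpCG_ext canPphi_ext])
  fix d e assume d: "d \<in> carrier G" and e: "e \<in> carrier G"
  have ea: "e \<otimes>\<^bsub>G\<^esub> inv\<^bsub>G\<^esub> a \<in> carrier G" using e a by simp
  have R: "Cmp CG x (Ao a x) (Ao b (Ao a x)) (canP_phi C G Ao b (Ao a x)) (canP_phi C G Ao a x) (d, e) =
     Cmp C (Ao e x) (Ao (e \<otimes>\<^bsub>G\<^esub> inv\<^bsub>G\<^esub> a) (Ao a x)) (Ao d (Ao b (Ao a x)))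
        (canP_phi C G Ao b (Ao a x) (d, e \<otimes>\<^bsub>G\<^esub> inv\<^bsub>G\<^esub> a)) (canP_phi C G Ao a x (e \<otimes>\<^bsub>G\<^esub> inv\<^bsub>G\<^esub> a, e))"
    using assms d e ea by (intro cmpCG_eval1) (auto simp: canPphi_eval solve2)
  show "Cmp CG x (Ao a x) (Ao b (Ao a x)) (canP_phi C G Ao b (Ao a x)) (canP_phi C G Ao a x) (d, e) =
        canP_phi C G Ao (b \<otimes>\<^bsub>G\<^esub> a) x (d, e)"
    unfolding R using assms d e ea by (auto simp: canPphi_eval solve1 G.m_assoc)
qed

lemma phi_one_CG:
  assumes x: "x \<in> Ob C"
  shows "canP_phi C G Ao \<one>\<^bsub>G\<^esub> x = Idm CG x"
  by (rule CG_ext[OF canPphi_ext]) (use assms in \<open>auto simp: canPphi_eval CG_simps\<close>)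

lemma decomp_CG:
  assumes x: "x \<in> Ob C" and y: "y \<in> Ob C" and f: "f \<in> Hom CG x y"
  shows "f = hsum CG x y {\<beta>\<in>carrier G. f (\<beta>, \<one>\<^bsub>G\<^esub>) \<noteq> Zerom C x (Ao \<beta> y)}
     (\<lambda>\<beta>. Cmp CG x (Ao \<beta> y) y (canP_phi C G Ao (inv\<^bsub>G\<^esub> \<beta>) (Ao \<beta> y))
                 (canP_mor C G Ao Am x (Ao \<beta> y) (f (\<beta>, \<one>\<^bsub>G\<^esub>))))"
    (is "f = hsum CG x y ?S ?T")
proof -
  have fin: "finite ?S" using HomCG_col1[OF f x] .
  have ThomCG: "?T \<beta> \<in> Hom CG x y" if "\<beta> \<in> carrier G" for \<beta>
  proof -
    have "canP_phi C G Ao (inv\<^bsub>G\<^esub> \<beta>) (Ao \<beta> y) \<in> Hom CG (Ao \<beta> y) (Ao (inv\<^bsub>G\<^esub> \<beta>) (Ao \<beta> y))"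
      using that y by (intro canPphi_hom) auto
    then have "canP_phi C G Ao (inv\<^bsub>G\<^esub> \<beta>) (Ao \<beta> y) \<in> Hom CG (Ao \<beta> y) y" using that y by simp
    then show ?thesis using that x y f by (intro cmp_CG_hom) auto
  qed
  show ?thesis
  proof (rule CG_ext[OF HomCG_ext[OF f] HomCG_ext])
    show "hsum CG x y ?S ?T \<in> Hom CG x y" using fin ThomCG x y by auto
  next
    fix b a assume b: "b \<in> carrier G" and a: "a \<in> carrier G"
    define \<beta>0 where "\<beta>0 = inv\<^bsub>G\<^esub> a \<otimes>\<^bsub>G\<^esub> b"
    have b0: "\<beta>0 \<in> carrier G" using a b by (simp add: \<beta>0_def)
    have Teval: "?T \<beta> (b, a) = Cmp C (Ao a x) (Ao a (Ao \<beta> y)) (Ao b y)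
         (if a = b \<otimes>\<^bsub>G\<^esub> inv\<^bsub>G\<^esub> \<beta> then Idm C (Ao a (Ao \<beta> y)) else Zerom C (Ao a (Ao \<beta> y)) (Ao b y))
         (Am a x (Ao \<beta> y) (f (\<beta>, \<one>\<^bsub>G\<^esub>)))" if be: "\<beta> \<in> carrier G" for \<beta>
    proof -
      have "canP_phi C G Ao (inv\<^bsub>G\<^esub> \<beta>) (Ao \<beta> y) \<in> Hom CG (Ao \<beta> y) y"
        using canPphi_hom[of "Ao \<beta> y" "inv\<^bsub>G\<^esub> \<beta>"] be y by simp
      then have "?T \<beta> (b, a) = Cmp C (Ao a x) (Ao a (Ao \<beta> y)) (Ao b y) (canP_phi C G Ao (inv\<^bsub>G\<^esub> \<beta>) (Ao \<beta> y) (b, a))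
            (canP_mor C G Ao Am x (Ao \<beta> y) (f (\<beta>, \<one>\<^bsub>G\<^esub>)) (a, a))"
        using be x y f a b by (intro cmpCG_eval1) (auto simp: canP_eval)
      then show ?thesis using be a b y by (simp add: canP_eval canPphi_eval)
    qed
    have cond: "a = b \<otimes>\<^bsub>G\<^esub> inv\<^bsub>G\<^esub> \<beta> \<longleftrightarrow> \<beta> = \<beta>0" if "\<beta> \<in> carrier G" for \<beta>
      using that a b unfolding \<beta>0_def
      by (metis G.inv_closed G.inv_solve_left G.inv_solve_right G.m_closed)
    have fba: "f (b, a) = Am a x (Ao \<beta>0 y) (f (\<beta>0, \<one>\<^bsub>G\<^esub>))"
      unfolding \<beta>0_def by (rule HomCG_col1_eq[OF f x y b a])
    have Ao0: "Ao a (Ao \<beta>0 y) = Ao b y" using a b y by (simp add: \<beta>0_def)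
    have hm: "Am a x (Ao \<beta>0 y) (f (\<beta>0, \<one>\<^bsub>G\<^esub>)) \<in> Hom C (Ao a x) (Ao b y)"
      using a b0 x y f Ao0 Am_hom[OF a x _ HomCG_hom1[OF f x b0]] by simp
    have T0: "?T \<beta>0 (b, a) = f (b, a)"
      unfolding Teval[OF b0] cond[OF b0] fba Ao0 using hm a b x y by simp
    have "hsum CG x y ?S ?T (b, a) = hsum C (Ao a x) (Ao b y) ?S (\<lambda>\<beta>. ?T \<beta> (b, a))"
      by (rule hsum_CG_eval[OF b a])
    also have "\<dots> = hsum C (Ao a x) (Ao b y) {\<beta>0} (\<lambda>\<beta>. ?T \<beta> (b, a))"
    proof (rule hsum_neutral)
      show "?T \<beta> (b, a) \<in> Hom C (Ao a x) (Ao b y)" if "\<beta> \<in> ?S" for \<beta>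
        using ThomCG[of \<beta>] that a b by auto
      show "?T \<beta> (b, a) \<in> Hom C (Ao a x) (Ao b y)" if "\<beta> \<in> {\<beta>0}" for \<beta>
        using ThomCG[of \<beta>] that a b b0 by auto
      show "?T \<beta> (b, a) = Zerom C (Ao a x) (Ao b y)" if "\<beta> \<in> {\<beta>0} - ?S" for \<beta>
      proof -
        have "f (\<beta>0, \<one>\<^bsub>G\<^esub>) = Zerom C x (Ao \<beta>0 y)" using that b0 by auto
        then show ?thesis using that T0 fba a b0 x y Ao0 by simp
      qed
      show "?T \<beta> (b, a) = Zerom C (Ao a x) (Ao b y)" if "\<beta> \<in> ?S - {\<beta>0}" for \<beta>
        using that Teval[of \<beta>] cond[of \<beta>] a b x y f by auto
    qed (use fin a b x y in auto)
    also have "\<dots> = f (b, a)"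
    proof -
      have "?T \<beta>0 (b, a) \<in> Hom C (Ao a x) (Ao b y)" using ThomCG[OF b0] a b by auto
      then show ?thesis using T0 a b x y by (subst hsum_single) auto
    qed
    finally show "f (b, a) = hsum CG x y ?S ?T (b, a)" by simp
  qed
qed

end


definition psi :: "'g monoid \<Rightarrow> ('g \<Rightarrow> 'o \<Rightarrow> 'o) \<Rightarrow> ('g \<Rightarrow> 'o \<Rightarrow> 'm2) \<Rightarrow> 'g \<Rightarrow> 'o \<Rightarrow> 'm2" where
  "psi G Ao \<phi> \<beta> w = \<phi> (inv\<^bsub>G\<^esub> \<beta>) (Ao \<beta> w)"

definition rterm where
  "rterm C G Ao D Fo Fm \<phi> f x y \<beta> =
     Cmp D (Fo x) (Fo (Ao \<beta> y)) (Fo y) (psi G Ao \<phi> \<beta> y) (Fm x (Ao \<beta> y) (f (\<beta>, \<one>\<^bsub>G\<^esub>)))"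

definition recon where
  "recon C G Ao D Fo Fm \<phi> x y f =
     hsum D (Fo x) (Fo y) {\<beta> \<in> carrier G. f (\<beta>, \<one>\<^bsub>G\<^esub>) \<noteq> Zerom C x (Ao \<beta> y)} (rterm C G Ao D Fo Fm \<phi> f x y)"

lemmas IF = inv_functor_def[THEN iffD1]

locale invf = gc C G Ao Am
  for C :: "('o, 'm, 'k::comm_ring_1) lcat" and G :: "'g monoid"
    and Ao :: "'g \<Rightarrow> 'o \<Rightarrow> 'o" and Am :: "'g \<Rightarrow> 'o \<Rightarrow> 'o \<Rightarrow> 'm \<Rightarrow> 'm" +
  fixes D :: "('o2, 'm2, 'k) lcat" and Fo :: "'o \<Rightarrow> 'o2" and Fm :: "'o \<Rightarrow> 'o \<Rightarrow> 'm \<Rightarrow> 'm2"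
    and \<phi> :: "'g \<Rightarrow> 'o \<Rightarrow> 'm2"
  assumes linD: "lin_cat D" and invF: "inv_functor C D G Ao Am Fo Fm \<phi>"
begin

sublocale D: lcat D by (rule lcat.intro) (rule linD)

lemma Ffun: "lin_functor C D Fo Fm" using invF[THEN IF, THEN conjunct1] .

lemma F_ob[simp,intro]: "x \<in> Ob C \<Longrightarrow> Fo x \<in> Ob D" by (rule LF_ob[OF Ffun])
lemma F_hom[simp,intro]: "x \<in> Ob C \<Longrightarrow> y \<in> Ob C \<Longrightarrow> f \<in> Hom C x y \<Longrightarrow> Fm x y f \<in> Hom D (Fo x) (Fo y)"
  by (rule LF_hom[OF Ffun])
lemma F_idm[simp]: "x \<in> Ob C \<Longrightarrow> Fm x x (Idm C x) = Idm D (Fo x)" by (rule LF_idm[OF Ffun])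
lemma F_cmp: "x \<in> Ob C \<Longrightarrow> y \<in> Ob C \<Longrightarrow> z \<in> Ob C \<Longrightarrow> f \<in> Hom C x y \<Longrightarrow> g \<in> Hom C y z \<Longrightarrow>
        Fm x z (Cmp C x y z g f) = Cmp D (Fo x) (Fo y) (Fo z) (Fm y z g) (Fm x y f)"
  by (rule LF_cmp[OF Ffun])
lemma F_add: "x \<in> Ob C \<Longrightarrow> y \<in> Ob C \<Longrightarrow> f \<in> Hom C x y \<Longrightarrow> g \<in> Hom C x y \<Longrightarrow>
        Fm x y (Addm C x y f g) = Addm D (Fo x) (Fo y) (Fm x y f) (Fm x y g)"
  by (rule LF_add[OF Ffun])
lemma F_smul: "x \<in> Ob C \<Longrightarrow> y \<in> Ob C \<Longrightarrow> f \<in> Hom C x y \<Longrightarrow>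
        Fm x y (Smul C x y a f) = Smul D (Fo x) (Fo y) a (Fm x y f)"
  by (rule LF_smul[OF Ffun])
lemma F_zero[simp]: "x \<in> Ob C \<Longrightarrow> y \<in> Ob C \<Longrightarrow> Fm x y (Zerom C x y) = Zerom D (Fo x) (Fo y)"
  by (rule functor_zero[where C=C]) (auto simp: linD F_add)
lemma F_hsum: "x \<in> Ob C \<Longrightarrow> y \<in> Ob C \<Longrightarrow> finite S \<Longrightarrow> (\<And>i. i \<in> S \<Longrightarrow> g i \<in> Hom C x y) \<Longrightarrow>
    Fm x y (hsum C x y S g) = hsum D (Fo x) (Fo y) S (\<lambda>i. Fm x y (g i))"
  by (rule functor_hsum[where C=C]) (auto simp: linD F_add)

lemma phi_hom[simp,intro]: "a \<in> carrier G \<Longrightarrow> x \<in> Ob C \<Longrightarrow> \<phi> a x \<in> Hom D (Fo x) (Fo (Ao a x))"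
  using invF[THEN IF, THEN conjunct2, THEN conjunct1] by blast
lemma phi_nat: "a \<in> carrier G \<Longrightarrow> x \<in> Ob C \<Longrightarrow> y \<in> Ob C \<Longrightarrow> f \<in> Hom C x y \<Longrightarrow>
        Cmp D (Fo x) (Fo y) (Fo (Ao a y)) (\<phi> a y) (Fm x y f) =
        Cmp D (Fo x) (Fo (Ao a x)) (Fo (Ao a y)) (Fm (Ao a x) (Ao a y) (Am a x y f)) (\<phi> a x)"
  using invF[THEN IF, THEN conjunct2, THEN conjunct2, THEN conjunct1] by blast
lemma phi_one[simp]: "x \<in> Ob C \<Longrightarrow> \<phi> \<one>\<^bsub>G\<^esub> x = Idm D (Fo x)"
  using invF[THEN IF, THEN conjunct2, THEN conjunct2, THEN conjunct2, THEN conjunct2, THEN conjunct1] by blast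
lemma phi_comp: "a \<in> carrier G \<Longrightarrow> b \<in> carrier G \<Longrightarrow> x \<in> Ob C \<Longrightarrow>
        Cmp D (Fo x) (Fo (Ao a x)) (Fo (Ao b (Ao a x))) (\<phi> b (Ao a x)) (\<phi> a x) = \<phi> (b \<otimes>\<^bsub>G\<^esub> a) x"
  using invF[THEN IF, THEN conjunct2, THEN conjunct2, THEN conjunct2, THEN conjunct2, THEN conjunct2] by blast

lemma D_cmp_smul_r: "x \<in> Ob D \<Longrightarrow> y \<in> Ob D \<Longrightarrow> z \<in> Ob D \<Longrightarrow> f \<in> Hom D x y \<Longrightarrow> g \<in> Hom D y z \<Longrightarrow>
   Cmp D x y z g (Smul D x y a f) = Smul D x z a (Cmp D x y z g f)"
  using D.L6_3 by blast

abbreviation "ps \<equiv> psi G Ao \<phi>"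
abbreviation "rt \<equiv> rterm C G Ao D Fo Fm \<phi>"
abbreviation "rc \<equiv> recon C G Ao D Fo Fm \<phi>"

lemma psi_hom[simp,intro]: "\<beta> \<in> carrier G \<Longrightarrow> w \<in> Ob C \<Longrightarrow> ps \<beta> w \<in> Hom D (Fo (Ao \<beta> w)) (Fo w)"
  using phi_hom[of "inv\<^bsub>G\<^esub> \<beta>" "Ao \<beta> w"] by (simp add: psi_def)

lemma psi_one[simp]: "w \<in> Ob C \<Longrightarrow> ps \<one>\<^bsub>G\<^esub> w = Idm D (Fo w)"
  by (simp add: psi_def)

lemma rt_hom[simp,intro]: "f \<in> Hom CG x y \<Longrightarrow> x \<in> Ob C \<Longrightarrow> y \<in> Ob C \<Longrightarrow> \<beta> \<in> carrier G \<Longrightarrow> rt f x y \<beta> \<in> Hom D (Fo x) (Fo y)"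
  unfolding rterm_def by (intro D.cmp_hom) auto

lemma rt_zero: "x \<in> Ob C \<Longrightarrow> y \<in> Ob C \<Longrightarrow> \<beta> \<in> carrier G \<Longrightarrow> f (\<beta>, \<one>\<^bsub>G\<^esub>) = Zerom C x (Ao \<beta> y) \<Longrightarrow> rt f x y \<beta> = Zerom D (Fo x) (Fo y)"
  unfolding rterm_def by simp

lemma recon_T:
  assumes "f \<in> Hom CG x y" "x \<in> Ob C" "y \<in> Ob C" "finite T" "T \<subseteq> carrier G"
    "\<And>\<beta>. \<beta> \<in> carrier G \<Longrightarrow> \<beta> \<notin> T \<Longrightarrow> f (\<beta>, \<one>\<^bsub>G\<^esub>) = Zerom C x (Ao \<beta> y)"
  shows "rc x y f = hsum D (Fo x) (Fo y) T (rt f x y)"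
  unfolding recon_def
  by (rule D.hsum_neutral) (use assms HomCG_col1[OF assms(1,2)] rt_zero in auto)

lemma recon_hom[simp,intro]: "f \<in> Hom CG x y \<Longrightarrow> x \<in> Ob C \<Longrightarrow> y \<in> Ob C \<Longrightarrow> rc x y f \<in> Hom D (Fo x) (Fo y)"
  unfolding recon_def by (intro D.hsum_hom) (auto intro: HomCG_col1)

lemma recon_idm:
  assumes x: "x \<in> Ob C"
  shows "rc x x (Idm CG x) = Idm D (Fo x)"
proof -
  have "rc x x (Idm CG x) = hsum D (Fo x) (Fo x) {\<one>\<^bsub>G\<^esub>} (rt (Idm CG x) x x)"
    by (rule recon_T[OF idm_CG_hom[OF x]]) (use x in \<open>auto simp: CG_simps\<close>)
  also have "\<dots> = rt (Idm CG x) x x \<one>\<^bsub>G\<^esub>" using x by (intro D.hsum_single) auto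
  also have "\<dots> = Idm D (Fo x)" using x by (simp add: rterm_def CG_simps)
  finally show ?thesis .
qed

lemma recon_add:
  assumes x: "x \<in> Ob C" and y: "y \<in> Ob C" and f: "f \<in> Hom CG x y" and g: "g \<in> Hom CG x y"
  shows "rc x y (Addm CG x y f g) = Addm D (Fo x) (Fo y) (rc x y f) (rc x y g)"
proof -
  let ?T = "{\<beta> \<in> carrier G. f (\<beta>, \<one>\<^bsub>G\<^esub>) \<noteq> Zerom C x (Ao \<beta> y)} \<union> {\<beta> \<in> carrier G. g (\<beta>, \<one>\<^bsub>G\<^esub>) \<noteq> Zerom C x (Ao \<beta> y)}"
  have fin: "finite ?T" using HomCG_col1[OF f x] HomCG_col1[OF g x] by simp
  have "rc x y (Addm CG x y f g) = hsum D (Fo x) (Fo y) ?T (rt (Addm CG x y f g) x y)"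
    by (rule recon_T[OF add_CG_hom[OF x y f g]]) (use x y f g fin in \<open>auto simp: CG_simps\<close>)
  also have "\<dots> = hsum D (Fo x) (Fo y) ?T (\<lambda>\<beta>. Addm D (Fo x) (Fo y) (rt f x y \<beta>) (rt g x y \<beta>))"
    using fin x y f g by (intro hsum_cong) (auto simp: rterm_def CG_simps F_add D.cmp_add_r)
  also have "\<dots> = Addm D (Fo x) (Fo y) (hsum D (Fo x) (Fo y) ?T (rt f x y)) (hsum D (Fo x) (Fo y) ?T (rt g x y))"
    using fin x y f g by (intro D.hsum_add) auto
  also have "\<dots> = Addm D (Fo x) (Fo y) (rc x y f) (rc x y g)"
  proof -
    have "rc x y f = hsum D (Fo x) (Fo y) ?T (rt f x y)"
      by (rule recon_T[OF f x y fin]) auto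
    moreover have "rc x y g = hsum D (Fo x) (Fo y) ?T (rt g x y)"
      by (rule recon_T[OF g x y fin]) auto
    ultimately show ?thesis by simp
  qed
  finally show ?thesis .
qed

lemma recon_smul:
  assumes x: "x \<in> Ob C" and y: "y \<in> Ob C" and f: "f \<in> Hom CG x y"
  shows "rc x y (Smul CG x y k f) = Smul D (Fo x) (Fo y) k (rc x y f)"
proof -
  let ?T = "{\<beta> \<in> carrier G. f (\<beta>, \<one>\<^bsub>G\<^esub>) \<noteq> Zerom C x (Ao \<beta> y)}"
  have fin: "finite ?T" using HomCG_col1[OF f x] by simp
  have "rc x y (Smul CG x y k f) = hsum D (Fo x) (Fo y) ?T (rt (Smul CG x y k f) x y)"
    by (rule recon_T[OF smul_CG_hom[OF x y f]]) (use x y f fin in \<open>auto simp: CG_simps\<close>)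
  also have "\<dots> = hsum D (Fo x) (Fo y) ?T (\<lambda>\<beta>. Smul D (Fo x) (Fo y) k (rt f x y \<beta>))"
    using fin x y f by (intro hsum_cong) (auto simp: rterm_def CG_simps F_smul D_cmp_smul_r)
  also have "\<dots> = Smul D (Fo x) (Fo y) k (hsum D (Fo x) (Fo y) ?T (rt f x y))"
    using fin x y f by (intro D.hsum_smul[symmetric]) auto
  also have "\<dots> = Smul D (Fo x) (Fo y) k (rc x y f)"
    by (simp add: recon_def)
  finally show ?thesis .
qed

lemma recon_P:
  assumes x: "x \<in> Ob C" and y: "y \<in> Ob C" and f: "f \<in> Hom C x y"
  shows "rc x y (canP_mor C G Ao Am x y f) = Fm x y f"
proof -
  have "rc x y (canP_mor C G Ao Am x y f) = hsum D (Fo x) (Fo y) {\<one>\<^bsub>G\<^esub>} (rt (canP_mor C G Ao Am x y f) x y)"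
    by (rule recon_T) (use x y f in \<open>auto simp: canP_eval\<close>)
  also have "\<dots> = rt (canP_mor C G Ao Am x y f) x y \<one>\<^bsub>G\<^esub>" using x y f by (intro D.hsum_single) auto
  also have "\<dots> = Fm x y f" using x y f by (simp add: rterm_def canP_eval)
  finally show ?thesis .
qed

lemma recon_phi:
  assumes x: "x \<in> Ob C" and a: "a \<in> carrier G"
  shows "rc x (Ao a x) (canP_phi C G Ao a x) = \<phi> a x"
proof -
  have ia: "inv\<^bsub>G\<^esub> a \<in> carrier G" using a by simp
  have ev: "canP_phi C G Ao a x (\<beta>, \<one>\<^bsub>G\<^esub>) = Zerom C x (Ao \<beta> (Ao a x))" if "\<beta> \<in> carrier G" "\<beta> \<noteq> inv\<^bsub>G\<^esub> a" for \<beta>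
  proof -
    have "\<one>\<^bsub>G\<^esub> \<noteq> \<beta> \<otimes>\<^bsub>G\<^esub> a" using that a G.inv_equality by fastforce
    then show ?thesis using that a x by (simp add: canPphi_eval)
  qed
  have "rc x (Ao a x) (canP_phi C G Ao a x) = hsum D (Fo x) (Fo (Ao a x)) {inv\<^bsub>G\<^esub> a} (rt (canP_phi C G Ao a x) x (Ao a x))"
    by (rule recon_T) (use x a ev in auto)
  also have "\<dots> = rt (canP_phi C G Ao a x) x (Ao a x) (inv\<^bsub>G\<^esub> a)" using x a by (intro D.hsum_single) auto
  also have "\<dots> = \<phi> a x" using x a by (simp add: rterm_def canPphi_eval psi_def)
  finally show ?thesis .
qed

end


context invf
begin

lemma gHom2:
  assumes "g \<in> Hom CG y z" "c \<in> carrier G" "\<gamma> \<in> carrier G" "y \<in> Ob C" "z \<in> Ob C"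
  shows "g (c \<otimes>\<^bsub>G\<^esub> \<gamma>, c) \<in> Hom C (Ao c y) (Ao c (Ao \<gamma> z))"
  using HomCG_hom[OF assms(1), of "c \<otimes>\<^bsub>G\<^esub> \<gamma>" c] assms by simp

lemma gcol1:
  assumes "g \<in> Hom CG y z" "c \<in> carrier G" "\<gamma> \<in> carrier G" "y \<in> Ob C" "z \<in> Ob C"
  shows "g (c \<otimes>\<^bsub>G\<^esub> \<gamma>, c) = Am c y (Ao \<gamma> z) (g (\<gamma>, \<one>\<^bsub>G\<^esub>))"
  using HomCG_eqv[OF assms(1) assms(2) assms(3) G.one_closed] assms by simp

lemma KI0:
  assumes y: "y \<in> Ob C" and z: "z \<in> Ob C" and c: "c \<in> carrier G" and ga: "\<gamma> \<in> carrier G" and g: "g \<in> Hom CG y z"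
  shows "Cmp D (Fo (Ao c y)) (Fo (Ao c (Ao \<gamma> z))) (Fo z) (ps (c \<otimes>\<^bsub>G\<^esub> \<gamma>) z)
            (Fm (Ao c y) (Ao c (Ao \<gamma> z)) (g (c \<otimes>\<^bsub>G\<^esub> \<gamma>, c)))
       = Cmp D (Fo (Ao c y)) (Fo y) (Fo z)
            (Cmp D (Fo y) (Fo (Ao \<gamma> z)) (Fo z) (ps \<gamma> z) (Fm y (Ao \<gamma> z) (g (\<gamma>, \<one>\<^bsub>G\<^esub>)))) (ps c y)"
proof -
  let ?h = "g (c \<otimes>\<^bsub>G\<^esub> \<gamma>, c)"
  let ?w = "Ao c (Ao \<gamma> z)"
  have h: "?h \<in> Hom C (Ao c y) ?w" by (rule gHom2[OF g c ga y z])
  have ic: "inv\<^bsub>G\<^esub> c \<in> carrier G" and ig: "inv\<^bsub>G\<^esub> \<gamma> \<in> carrier G" using c ga by auto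
  have g1: "g (\<gamma>, \<one>\<^bsub>G\<^esub>) = Am (inv\<^bsub>G\<^esub> c) (Ao c y) ?w ?h"
  proof -
    have "g (inv\<^bsub>G\<^esub> c \<otimes>\<^bsub>G\<^esub> (c \<otimes>\<^bsub>G\<^esub> \<gamma>), inv\<^bsub>G\<^esub> c \<otimes>\<^bsub>G\<^esub> c) = Am (inv\<^bsub>G\<^esub> c) (Ao c y) (Ao (c \<otimes>\<^bsub>G\<^esub> \<gamma>) z) ?h"
      using HomCG_eqv[OF g ic _ c] c ga by simp
    moreover have "inv\<^bsub>G\<^esub> c \<otimes>\<^bsub>G\<^esub> (c \<otimes>\<^bsub>G\<^esub> \<gamma>) = \<gamma>" using c ga by (simp add: G.m_assoc[symmetric])
    ultimately show ?thesis using c ga z by simp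
  qed
  have ps_split: "ps (c \<otimes>\<^bsub>G\<^esub> \<gamma>) z = Cmp D (Fo ?w) (Fo (Ao \<gamma> z)) (Fo z) (ps \<gamma> z) (\<phi> (inv\<^bsub>G\<^esub> c) ?w)"
  proof -
    have "Cmp D (Fo ?w) (Fo (Ao (inv\<^bsub>G\<^esub> c) ?w)) (Fo (Ao (inv\<^bsub>G\<^esub> \<gamma>) (Ao (inv\<^bsub>G\<^esub> c) ?w))) (\<phi> (inv\<^bsub>G\<^esub> \<gamma>) (Ao (inv\<^bsub>G\<^esub> c) ?w)) (\<phi> (inv\<^bsub>G\<^esub> c) ?w)
       = \<phi> (inv\<^bsub>G\<^esub> \<gamma> \<otimes>\<^bsub>G\<^esub> inv\<^bsub>G\<^esub> c) ?w"
      by (rule phi_comp) (use ic ig c ga z in auto)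
    then show ?thesis using c ga z by (simp add: psi_def G.inv_mult_group)
  qed
  have nat: "Cmp D (Fo (Ao c y)) (Fo ?w) (Fo (Ao \<gamma> z)) (\<phi> (inv\<^bsub>G\<^esub> c) ?w) (Fm (Ao c y) ?w ?h)
      = Cmp D (Fo (Ao c y)) (Fo y) (Fo (Ao \<gamma> z)) (Fm y (Ao \<gamma> z) (g (\<gamma>, \<one>\<^bsub>G\<^esub>))) (ps c y)"
  proof -
    have "Cmp D (Fo (Ao c y)) (Fo ?w) (Fo (Ao (inv\<^bsub>G\<^esub> c) ?w)) (\<phi> (inv\<^bsub>G\<^esub> c) ?w) (Fm (Ao c y) ?w ?h) =
        Cmp D (Fo (Ao c y)) (Fo (Ao (inv\<^bsub>G\<^esub> c) (Ao c y))) (Fo (Ao (inv\<^bsub>G\<^esub> c) ?w))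
          (Fm (Ao (inv\<^bsub>G\<^esub> c) (Ao c y)) (Ao (inv\<^bsub>G\<^esub> c) ?w) (Am (inv\<^bsub>G\<^esub> c) (Ao c y) ?w ?h)) (\<phi> (inv\<^bsub>G\<^esub> c) (Ao c y))"
      by (rule phi_nat) (use ic c ga y z h in auto)
    then show ?thesis using c ga y z by (simp add: g1[symmetric] psi_def)
  qed
  have hF: "Fm (Ao c y) ?w ?h \<in> Hom D (Fo (Ao c y)) (Fo ?w)" using h c ga y z by auto
  have p1: "\<phi> (inv\<^bsub>G\<^esub> c) ?w \<in> Hom D (Fo ?w) (Fo (Ao \<gamma> z))"
    using phi_hom[OF ic, of ?w] c ga z by simp
  have p2: "ps \<gamma> z \<in> Hom D (Fo (Ao \<gamma> z)) (Fo z)" using ga z by auto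
  have p3: "ps c y \<in> Hom D (Fo (Ao c y)) (Fo y)" using c y by auto
  have p4: "Fm y (Ao \<gamma> z) (g (\<gamma>, \<one>\<^bsub>G\<^esub>)) \<in> Hom D (Fo y) (Fo (Ao \<gamma> z))" using g ga y z by auto
  have "Cmp D (Fo (Ao c y)) (Fo ?w) (Fo z) (ps (c \<otimes>\<^bsub>G\<^esub> \<gamma>) z) (Fm (Ao c y) ?w ?h)
     = Cmp D (Fo (Ao c y)) (Fo ?w) (Fo z) (Cmp D (Fo ?w) (Fo (Ao \<gamma> z)) (Fo z) (ps \<gamma> z) (\<phi> (inv\<^bsub>G\<^esub> c) ?w)) (Fm (Ao c y) ?w ?h)"
    by (simp only: ps_split)
  also have "\<dots> = Cmp D (Fo (Ao c y)) (Fo (Ao \<gamma> z)) (Fo z) (ps \<gamma> z)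
        (Cmp D (Fo (Ao c y)) (Fo ?w) (Fo (Ao \<gamma> z)) (\<phi> (inv\<^bsub>G\<^esub> c) ?w) (Fm (Ao c y) ?w ?h))"
    by (rule D.cmp_assoc[symmetric]) (use hF p1 p2 c ga y z in auto)
  also have "\<dots> = Cmp D (Fo (Ao c y)) (Fo (Ao \<gamma> z)) (Fo z) (ps \<gamma> z)
        (Cmp D (Fo (Ao c y)) (Fo y) (Fo (Ao \<gamma> z)) (Fm y (Ao \<gamma> z) (g (\<gamma>, \<one>\<^bsub>G\<^esub>))) (ps c y))"
    by (simp only: nat)
  also have "\<dots> = Cmp D (Fo (Ao c y)) (Fo y) (Fo z)
            (Cmp D (Fo y) (Fo (Ao \<gamma> z)) (Fo z) (ps \<gamma> z) (Fm y (Ao \<gamma> z) (g (\<gamma>, \<one>\<^bsub>G\<^esub>)))) (ps c y)"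
    by (rule D.cmp_assoc) (use p2 p3 p4 c ga y z in auto)
  finally show ?thesis .
qed


definition XX where
  "XX x y z g f \<beta> c = Cmp D (Fo x) (Fo (Ao \<beta> z)) (Fo z) (ps \<beta> z)
      (Cmp D (Fo x) (Fo (Ao c y)) (Fo (Ao \<beta> z)) (Fm (Ao c y) (Ao \<beta> z) (g (\<beta>, c))) (Fm x (Ao c y) (f (c, \<one>\<^bsub>G\<^esub>))))"

lemma XX_hom:
  assumes "x \<in> Ob C" "y \<in> Ob C" "z \<in> Ob C" "f \<in> Hom CG x y" "g \<in> Hom CG y z" "\<beta> \<in> carrier G" "c \<in> carrier G"
  shows "XX x y z g f \<beta> c \<in> Hom D (Fo x) (Fo z)"
  unfolding XX_def using assms by (intro D.cmp_hom) auto

lemma XX_zero: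
  assumes "x \<in> Ob C" "y \<in> Ob C" "z \<in> Ob C" "f \<in> Hom CG x y" "g \<in> Hom CG y z" "\<beta> \<in> carrier G" "c \<in> carrier G"
    "g (\<beta>, c) = Zerom C (Ao c y) (Ao \<beta> z)"
  shows "XX x y z g f \<beta> c = Zerom D (Fo x) (Fo z)"
  unfolding XX_def using assms by simp

lemma XX_KI:
  assumes x: "x \<in> Ob C" and y: "y \<in> Ob C" and z: "z \<in> Ob C" and f: "f \<in> Hom CG x y" and g: "g \<in> Hom CG y z"
    and c: "c \<in> carrier G" and ga: "\<gamma> \<in> carrier G"
  shows "XX x y z g f (c \<otimes>\<^bsub>G\<^esub> \<gamma>) c = Cmp D (Fo x) (Fo y) (Fo z) (rt g y z \<gamma>) (rt f x y c)"
proof -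
  let ?w = "Ao c (Ao \<gamma> z)"
  have h: "g (c \<otimes>\<^bsub>G\<^esub> \<gamma>, c) \<in> Hom C (Ao c y) ?w" by (rule gHom2[OF g c ga y z])
  have hF: "Fm (Ao c y) ?w (g (c \<otimes>\<^bsub>G\<^esub> \<gamma>, c)) \<in> Hom D (Fo (Ao c y)) (Fo ?w)" using h c ga y z by auto
  have fF: "Fm x (Ao c y) (f (c, \<one>\<^bsub>G\<^esub>)) \<in> Hom D (Fo x) (Fo (Ao c y))" using f c x y by auto
  have p0: "ps (c \<otimes>\<^bsub>G\<^esub> \<gamma>) z \<in> Hom D (Fo ?w) (Fo z)" using psi_hom[of "c \<otimes>\<^bsub>G\<^esub> \<gamma>" z] c ga z by simp
  have p2: "ps \<gamma> z \<in> Hom D (Fo (Ao \<gamma> z)) (Fo z)" using ga z by auto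
  have p3: "ps c y \<in> Hom D (Fo (Ao c y)) (Fo y)" using c y by auto
  have p4: "Fm y (Ao \<gamma> z) (g (\<gamma>, \<one>\<^bsub>G\<^esub>)) \<in> Hom D (Fo y) (Fo (Ao \<gamma> z))" using g ga y z by auto
  have "XX x y z g f (c \<otimes>\<^bsub>G\<^esub> \<gamma>) c = Cmp D (Fo x) (Fo ?w) (Fo z) (ps (c \<otimes>\<^bsub>G\<^esub> \<gamma>) z)
      (Cmp D (Fo x) (Fo (Ao c y)) (Fo ?w) (Fm (Ao c y) ?w (g (c \<otimes>\<^bsub>G\<^esub> \<gamma>, c))) (Fm x (Ao c y) (f (c, \<one>\<^bsub>G\<^esub>))))"
    unfolding XX_def using c ga z by simp
  also have "\<dots> = Cmp D (Fo x) (Fo (Ao c y)) (Fo z)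
      (Cmp D (Fo (Ao c y)) (Fo ?w) (Fo z) (ps (c \<otimes>\<^bsub>G\<^esub> \<gamma>) z) (Fm (Ao c y) ?w (g (c \<otimes>\<^bsub>G\<^esub> \<gamma>, c))))
      (Fm x (Ao c y) (f (c, \<one>\<^bsub>G\<^esub>)))"
    by (rule D.cmp_assoc) (use hF fF p0 c ga x y z in auto)
  also have "\<dots> = Cmp D (Fo x) (Fo (Ao c y)) (Fo z)
      (Cmp D (Fo (Ao c y)) (Fo y) (Fo z)
            (Cmp D (Fo y) (Fo (Ao \<gamma> z)) (Fo z) (ps \<gamma> z) (Fm y (Ao \<gamma> z) (g (\<gamma>, \<one>\<^bsub>G\<^esub>)))) (ps c y))
      (Fm x (Ao c y) (f (c, \<one>\<^bsub>G\<^esub>)))"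
    by (simp only: KI0[OF y z c ga g])
  also have "\<dots> = Cmp D (Fo x) (Fo y) (Fo z)
            (Cmp D (Fo y) (Fo (Ao \<gamma> z)) (Fo z) (ps \<gamma> z) (Fm y (Ao \<gamma> z) (g (\<gamma>, \<one>\<^bsub>G\<^esub>))))
            (Cmp D (Fo x) (Fo (Ao c y)) (Fo y) (ps c y) (Fm x (Ao c y) (f (c, \<one>\<^bsub>G\<^esub>))))"
    by (rule D.cmp_assoc[symmetric]) (use fF p2 p3 p4 c ga x y z in auto)
  also have "\<dots> = Cmp D (Fo x) (Fo y) (Fo z) (rt g y z \<gamma>) (rt f x y c)"
    by (simp add: rterm_def)
  finally show ?thesis .
qed

lemma recon_cmp:
  assumes x: "x \<in> Ob C" and y: "y \<in> Ob C" and z: "z \<in> Ob C" and f: "f \<in> Hom CG x y" and g: "g \<in> Hom CG y z"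
  shows "rc x z (Cmp CG x y z g f) = Cmp D (Fo x) (Fo y) (Fo z) (rc y z g) (rc x y f)"
proof -
  let ?Sf = "{c\<in>carrier G. f (c, \<one>\<^bsub>G\<^esub>) \<noteq> Zerom C x (Ao c y)}"
  let ?Sg = "{\<gamma>\<in>carrier G. g (\<gamma>, \<one>\<^bsub>G\<^esub>) \<noteq> Zerom C y (Ao \<gamma> z)}"
  let ?T = "\<Union>c\<in>?Sf. {\<beta>\<in>carrier G. g (\<beta>, c) \<noteq> Zerom C (Ao c y) (Ao \<beta> z)}"
  let ?h = "Cmp CG x y z g f"
  have finSf: "finite ?Sf" using HomCG_col1[OF f x] .
  have finSg: "finite ?Sg" using HomCG_col1[OF g y] .
  have finT: "finite ?T" using finSf HomCG_col[OF g] by blast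
  have TG: "?T \<subseteq> carrier G" by blast
  have hh: "?h \<in> Hom CG x z" using x y z f g by auto
  have A: "rc x z ?h = hsum D (Fo x) (Fo z) ?T (rt ?h x z)"
  proof (rule recon_T[OF hh x z finT TG])
    fix \<beta> assume b: "\<beta> \<in> carrier G" "\<beta> \<notin> ?T"
    show "?h (\<beta>, \<one>\<^bsub>G\<^esub>) = Zerom C x (Ao \<beta> z)"
    proof (rule ccontr)
      assume "?h (\<beta>, \<one>\<^bsub>G\<^esub>) \<noteq> Zerom C x (Ao \<beta> z)"
      then have "?h (\<beta>, \<one>\<^bsub>G\<^esub>) \<noteq> Zerom C (Ao \<one>\<^bsub>G\<^esub> x) (Ao \<beta> z)" using x by simp
      from cmpCG_nonzero[OF x y z f g b(1) G.one_closed this] obtain c where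
        "c \<in> carrier G" "f (c, \<one>\<^bsub>G\<^esub>) \<noteq> Zerom C (Ao \<one>\<^bsub>G\<^esub> x) (Ao c y)" "g (\<beta>, c) \<noteq> Zerom C (Ao c y) (Ao \<beta> z)"
        by blast
      then show False using b x by auto
    qed
  qed
  have B: "rt ?h x z \<beta> = hsum D (Fo x) (Fo z) ?Sf (XX x y z g f \<beta>)" if b: "\<beta> \<in> carrier G" for \<beta>
  proof -
    have hb: "?h (\<beta>, \<one>\<^bsub>G\<^esub>) = hsum C x (Ao \<beta> z) ?Sf (\<lambda>c. Cmp C x (Ao c y) (Ao \<beta> z) (g (\<beta>, c)) (f (c, \<one>\<^bsub>G\<^esub>)))"
      using cmpCG_eval[OF b G.one_closed, of x y z g f] x by simp
    have "Fm x (Ao \<beta> z) (?h (\<beta>, \<one>\<^bsub>G\<^esub>)) = hsum D (Fo x) (Fo (Ao \<beta> z)) ?Sf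
         (\<lambda>c. Fm x (Ao \<beta> z) (Cmp C x (Ao c y) (Ao \<beta> z) (g (\<beta>, c)) (f (c, \<one>\<^bsub>G\<^esub>))))"
      unfolding hb using b x y z f g finSf by (intro F_hsum) auto
    also have "\<dots> = hsum D (Fo x) (Fo (Ao \<beta> z)) ?Sf
         (\<lambda>c. Cmp D (Fo x) (Fo (Ao c y)) (Fo (Ao \<beta> z)) (Fm (Ao c y) (Ao \<beta> z) (g (\<beta>, c))) (Fm x (Ao c y) (f (c, \<one>\<^bsub>G\<^esub>))))"
      using b x y z f g finSf by (intro hsum_cong) (auto simp: F_cmp)
    finally have e: "Fm x (Ao \<beta> z) (?h (\<beta>, \<one>\<^bsub>G\<^esub>)) = \<dots>" .
    show ?thesis unfolding rterm_def e XX_def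
      using b x y z f g finSf by (intro D.hsum_cmp_r) auto
  qed
  have D: "hsum D (Fo x) (Fo z) ?T (\<lambda>\<beta>. XX x y z g f \<beta> c) =
           hsum D (Fo x) (Fo z) ?Sg (\<lambda>\<gamma>. Cmp D (Fo x) (Fo y) (Fo z) (rt g y z \<gamma>) (rt f x y c))"
    if cS: "c \<in> ?Sf" for c
  proof -
    have c: "c \<in> carrier G" using cS by blast
    let ?B = "(\<lambda>\<gamma>. c \<otimes>\<^bsub>G\<^esub> \<gamma>) ` ?Sg"
    have BG: "?B \<subseteq> carrier G" using c by auto
    have "hsum D (Fo x) (Fo z) ?T (\<lambda>\<beta>. XX x y z g f \<beta> c) = hsum D (Fo x) (Fo z) ?B (\<lambda>\<beta>. XX x y z g f \<beta> c)"
    proof (rule D.hsum_neutral)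
      show "finite ?B" using finSg by simp
      show "XX x y z g f \<beta> c \<in> Hom D (Fo x) (Fo z)" if "\<beta> \<in> ?T" for \<beta>
        using that XX_hom[OF x y z f g _ c] by blast
      show "XX x y z g f \<beta> c \<in> Hom D (Fo x) (Fo z)" if "\<beta> \<in> ?B" for \<beta>
        using that BG XX_hom[OF x y z f g _ c] by blast
      show "XX x y z g f \<beta> c = Zerom D (Fo x) (Fo z)" if "\<beta> \<in> ?B - ?T" for \<beta>
      proof -
        have "\<beta> \<in> carrier G" using that BG by blast
        moreover have "g (\<beta>, c) = Zerom C (Ao c y) (Ao \<beta> z)" using that cS \<open>\<beta> \<in> carrier G\<close> by blast
        ultimately show ?thesis by (rule XX_zero[OF x y z f g _ c])
      qed
      show "XX x y z g f \<beta> c = Zerom D (Fo x) (Fo z)" if "\<beta> \<in> ?T - ?B" for \<beta>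
      proof -
        have bG: "\<beta> \<in> carrier G" using that by blast
        define \<gamma> where "\<gamma> = inv\<^bsub>G\<^esub> c \<otimes>\<^bsub>G\<^esub> \<beta>"
        have ga: "\<gamma> \<in> carrier G" "\<beta> = c \<otimes>\<^bsub>G\<^esub> \<gamma>" using c bG by (auto simp: \<gamma>_def G.m_assoc[symmetric])
        have "\<gamma> \<notin> ?Sg" using that ga by blast
        then have g0: "g (\<gamma>, \<one>\<^bsub>G\<^esub>) = Zerom C y (Ao \<gamma> z)" using ga by blast
        have "g (\<beta>, c) = Zerom C (Ao c y) (Ao \<beta> z)"
          using gcol1[OF g c ga(1) y z] g0 ga c y z by simp
        then show ?thesis by (rule XX_zero[OF x y z f g bG c])
      qed
    qed (use finT x z in auto)
    also have "\<dots> = hsum D (Fo x) (Fo z) ?Sg (\<lambda>\<gamma>. XX x y z g f (c \<otimes>\<^bsub>G\<^esub> \<gamma>) c)"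
      by (rule D.hsum_reindex) (use finSg c x z XX_hom[OF x y z f g _ c] in \<open>auto simp: inj_on_def\<close>)
    also have "\<dots> = hsum D (Fo x) (Fo z) ?Sg (\<lambda>\<gamma>. Cmp D (Fo x) (Fo y) (Fo z) (rt g y z \<gamma>) (rt f x y c))"
      using finSg c by (intro hsum_cong) (auto intro!: XX_KI[OF x y z f g])
    finally show ?thesis .
  qed
  have "rc x z ?h = hsum D (Fo x) (Fo z) ?T (\<lambda>\<beta>. hsum D (Fo x) (Fo z) ?Sf (XX x y z g f \<beta>))"
    unfolding A using finT TG B by (intro hsum_cong) auto
  also have "\<dots> = hsum D (Fo x) (Fo z) ?Sf (\<lambda>c. hsum D (Fo x) (Fo z) ?T (\<lambda>\<beta>. XX x y z g f \<beta> c))"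
    by (rule D.hsum_swap) (use finT finSf TG x z XX_hom[OF x y z f g] in auto)
  also have "\<dots> = hsum D (Fo x) (Fo z) ?Sf (\<lambda>c. hsum D (Fo x) (Fo z) ?Sg (\<lambda>\<gamma>. Cmp D (Fo x) (Fo y) (Fo z) (rt g y z \<gamma>) (rt f x y c)))"
    using finSf D by (intro hsum_cong) auto
  also have "\<dots> = hsum D (Fo x) (Fo z) ?Sf (\<lambda>c. Cmp D (Fo x) (Fo y) (Fo z) (rc y z g) (rt f x y c))"
    unfolding recon_def using finSf finSg x y z f g by (intro hsum_cong D.hsum_cmp_l[symmetric]) auto
  also have "\<dots> = Cmp D (Fo x) (Fo y) (Fo z) (rc y z g) (rc x y f)"
    unfolding recon_def[of _ _ _ _ _ _ _ x y f] using finSf x y z f g by (intro D.hsum_cmp_r[symmetric]) auto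
  finally show ?thesis .
qed

end


context invf
begin

definition "Hm = (\<lambda>x y. if x \<in> Ob C \<and> y \<in> Ob C then restrict (rc x y) (Hom CG x y) else (\<lambda>_. undefined))"

lemma Hm_eval[simp]: "x \<in> Ob C \<Longrightarrow> y \<in> Ob C \<Longrightarrow> f \<in> Hom CG x y \<Longrightarrow> Hm x y f = rc x y f"
  by (simp add: Hm_def)

lemma H_lin: "lin_functor CG D Fo Hm"
  unfolding lin_functor_def CG_simps(1)
proof (intro conjI ballI allI)
  fix x assume "x \<in> Ob C" then show "Fo x \<in> Ob D" by auto
next
  fix x y f assume "x \<in> Ob C" "y \<in> Ob C" "f \<in> Hom CG x y"
  then show "Hm x y f \<in> Hom D (Fo x) (Fo y)" by auto
next
  fix x assume "x \<in> Ob C" then show "Hm x x (Idm CG x) = Idm D (Fo x)" by (simp add: recon_idm)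
next
  fix x y z f g assume "x \<in> Ob C" "y \<in> Ob C" "z \<in> Ob C" "f \<in> Hom CG x y" "g \<in> Hom CG y z"
  then show "Hm x z (Cmp CG x y z g f) = Cmp D (Fo x) (Fo y) (Fo z) (Hm y z g) (Hm x y f)"
    by (simp add: recon_cmp)
next
  fix x y f g assume "x \<in> Ob C" "y \<in> Ob C" "f \<in> Hom CG x y" "g \<in> Hom CG x y"
  then show "Hm x y (Addm CG x y f g) = Addm D (Fo x) (Fo y) (Hm x y f) (Hm x y g)"
    by (simp add: recon_add)
next
  fix x y a f assume "x \<in> Ob C" "y \<in> Ob C" "f \<in> Hom CG x y"
  then show "Hm x y (Smul CG x y a f) = Smul D (Fo x) (Fo y) a (Hm x y f)"
    by (simp add: recon_smul)
qed

lemma H_fun: "Fo \<in> extensional (Ob C) \<Longrightarrow> (Fo, Hm) \<in> Fun_obj CG D"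
  unfolding Fun_obj_def ext_functor_def using H_lin by (auto simp: CG_simps(1) Hm_def)

lemma H_pullback:
  assumes "ext_functor C Fo Fm" "\<forall>a x. a \<notin> carrier G \<or> x \<notin> Ob C \<longrightarrow> \<phi> a x = undefined"
  shows "pullback_obj C G Ao Am (Fo, Hm) = ((Fo, Fm), \<phi>)"
proof -
  have Fo: "Fo \<in> extensional (Ob C)" and Fm: "\<And>x y. Fm x y \<in> extensional (if x \<in> Ob C \<and> y \<in> Ob C then Hom C x y else {})"
    using assms(1) unfolding ext_functor_def by auto
  have 1: "restrict (\<lambda>x. fst (Fo, Hm) x) (Ob C) = Fo" using Fo by (simp add: extensional_restrict)
  have 2: "(\<lambda>x y. if x \<in> Ob C \<and> y \<in> Ob C
              then restrict (\<lambda>f. snd (Fo, Hm) x y (canP_mor C G Ao Am x y f)) (Hom C x y)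
              else (\<lambda>_. undefined)) = Fm"
  proof (intro ext)
    fix x y f
    show "(if x \<in> Ob C \<and> y \<in> Ob C
              then restrict (\<lambda>f. snd (Fo, Hm) x y (canP_mor C G Ao Am x y f)) (Hom C x y)
              else (\<lambda>_. undefined)) f = Fm x y f"
    proof (cases "x \<in> Ob C \<and> y \<in> Ob C")
      case True
      then show ?thesis
      proof (cases "f \<in> Hom C x y")
        case True2: True
        then show ?thesis using True by (simp add: recon_P)
      next
        case False
        then show ?thesis using True Fm[of x y] by (simp add: extensional_def)
      qed
    next
      case False
      then show ?thesis using Fm[of x y] by (auto simp: extensional_def)
    qed
  qed
  have 3: "(\<lambda>a x. if a \<in> carrier G \<and> x \<in> Ob C
             then snd (Fo, Hm) x (Ao a x) (canP_phi C G Ao a x) else undefined) = \<phi>"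
  proof (intro ext)
    fix a x
    show "(if a \<in> carrier G \<and> x \<in> Ob C then snd (Fo, Hm) x (Ao a x) (canP_phi C G Ao a x) else undefined) = \<phi> a x"
      using assms(2) by (auto simp: recon_phi)
  qed
  show ?thesis unfolding pullback_obj_def 1 2 3 ..
qed

end


locale funH = gc C G Ao Am
  for C :: "('o, 'm, 'k::comm_ring_1) lcat" and G :: "'g monoid"
    and Ao :: "'g \<Rightarrow> 'o \<Rightarrow> 'o" and Am :: "'g \<Rightarrow> 'o \<Rightarrow> 'o \<Rightarrow> 'm \<Rightarrow> 'm" +
  fixes D :: "('o2, 'm2, 'k) lcat" and Ho :: "'o \<Rightarrow> 'o2" and HH :: "'o \<Rightarrow> 'o \<Rightarrow> ('g \<times> 'g \<Rightarrow> 'm) \<Rightarrow> 'm2"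
  assumes linD: "lin_cat D" and HF: "(Ho, HH) \<in> Fun_obj CG D"
begin

sublocale D: lcat D by (rule lcat.intro) (rule linD)

lemma H_lin: "lin_functor CG D Ho HH" using HF by (simp add: Fun_obj_def)
lemma H_ext: "ext_functor CG Ho HH" using HF by (simp add: Fun_obj_def)

lemma H_ob[simp,intro]: "x \<in> Ob C \<Longrightarrow> Ho x \<in> Ob D" using LF_ob[OF H_lin] by (simp add: CG_simps)
lemma H_hom[simp,intro]: "x \<in> Ob C \<Longrightarrow> y \<in> Ob C \<Longrightarrow> f \<in> Hom CG x y \<Longrightarrow> HH x y f \<in> Hom D (Ho x) (Ho y)"
  using LF_hom[OF H_lin] by (simp add: CG_simps)
lemma H_idm[simp]: "x \<in> Ob C \<Longrightarrow> HH x x (Idm CG x) = Idm D (Ho x)" using LF_idm[OF H_lin] by (simp add: CG_simps)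
lemma H_cmp: "x \<in> Ob C \<Longrightarrow> y \<in> Ob C \<Longrightarrow> z \<in> Ob C \<Longrightarrow> f \<in> Hom CG x y \<Longrightarrow> g \<in> Hom CG y z \<Longrightarrow>
        HH x z (Cmp CG x y z g f) = Cmp D (Ho x) (Ho y) (Ho z) (HH y z g) (HH x y f)"
  using LF_cmp[OF H_lin] by (simp add: CG_simps)
lemma H_add: "x \<in> Ob C \<Longrightarrow> y \<in> Ob C \<Longrightarrow> f \<in> Hom CG x y \<Longrightarrow> g \<in> Hom CG x y \<Longrightarrow>
        HH x y (Addm CG x y f g) = Addm D (Ho x) (Ho y) (HH x y f) (HH x y g)"
  using LF_add[OF H_lin] by (simp add: CG_simps)
lemma H_smul: "x \<in> Ob C \<Longrightarrow> y \<in> Ob C \<Longrightarrow> f \<in> Hom CG x y \<Longrightarrow>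
        HH x y (Smul CG x y a f) = Smul D (Ho x) (Ho y) a (HH x y f)"
  using LF_smul[OF H_lin] by (simp add: CG_simps)

definition "pFo = restrict Ho (Ob C)"
definition "pFm = (\<lambda>x y. if x \<in> Ob C \<and> y \<in> Ob C
              then restrict (\<lambda>f. HH x y (canP_mor C G Ao Am x y f)) (Hom C x y)
              else (\<lambda>_. undefined))"
definition "p\<phi> = (\<lambda>a x. if a \<in> carrier G \<and> x \<in> Ob C
             then HH x (Ao a x) (canP_phi C G Ao a x) else undefined)"

lemma pb_eq: "pullback_obj C G Ao Am (Ho, HH) = ((pFo, pFm), p\<phi>)"
  unfolding pullback_obj_def pFo_def pFm_def p\<phi>_def snd_conv fst_conv
  by (simp add: restrict_def)

lemma pFo[simp]: "x \<in> Ob C \<Longrightarrow> pFo x = Ho x" by (simp add: pFo_def)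
lemma pFm[simp]: "x \<in> Ob C \<Longrightarrow> y \<in> Ob C \<Longrightarrow> h \<in> Hom C x y \<Longrightarrow> pFm x y h = HH x y (canP_mor C G Ao Am x y h)"
  by (simp add: pFm_def)
lemma pphi[simp]: "a \<in> carrier G \<Longrightarrow> x \<in> Ob C \<Longrightarrow> p\<phi> a x = HH x (Ao a x) (canP_phi C G Ao a x)"
  by (simp add: p\<phi>_def)

lemma HPhom[simp,intro]: "x \<in> Ob C \<Longrightarrow> y \<in> Ob C \<Longrightarrow> h \<in> Hom C x y \<Longrightarrow> HH x y (canP_mor C G Ao Am x y h) \<in> Hom D (Ho x) (Ho y)"
  by auto
lemma HPhihom[simp,intro]: "a \<in> carrier G \<Longrightarrow> x \<in> Ob C \<Longrightarrow> HH x (Ao a x) (canP_phi C G Ao a x) \<in> Hom D (Ho x) (Ho (Ao a x))"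
  by auto

lemma pb_lin: "lin_functor C D pFo pFm"
  unfolding lin_functor_def
proof (intro conjI ballI allI)
  fix x assume "x \<in> Ob C" then show "pFo x \<in> Ob D" by auto
next
  fix x y f assume "x \<in> Ob C" "y \<in> Ob C" "f \<in> Hom C x y"
  then show "pFm x y f \<in> Hom D (pFo x) (pFo y)" by auto
next
  fix x assume "x \<in> Ob C" then show "pFm x x (Idm C x) = Idm D (pFo x)" by (simp add: canP_idm)
next
  fix x y z f g assume "x \<in> Ob C" "y \<in> Ob C" "z \<in> Ob C" "f \<in> Hom C x y" "g \<in> Hom C y z"
  then show "pFm x z (Cmp C x y z g f) = Cmp D (pFo x) (pFo y) (pFo z) (pFm y z g) (pFm x y f)"
    by (simp add: canP_cmp[symmetric] H_cmp)
next
  fix x y f g assume "x \<in> Ob C" "y \<in> Ob C" "f \<in> Hom C x y" "g \<in> Hom C x y"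
  then show "pFm x y (Addm C x y f g) = Addm D (pFo x) (pFo y) (pFm x y f) (pFm x y g)"
    by (simp add: canP_add H_add)
next
  fix x y a f assume "x \<in> Ob C" "y \<in> Ob C" "f \<in> Hom C x y"
  then show "pFm x y (Smul C x y a f) = Smul D (pFo x) (pFo y) a (pFm x y f)"
    by (simp add: canP_smul H_smul)
qed

lemma pb_inv: "inv_functor C D G Ao Am pFo pFm p\<phi>"
  unfolding inv_functor_def
proof (intro conjI ballI pb_lin)
  fix a x assume "a \<in> carrier G" "x \<in> Ob C"
  then show "p\<phi> a x \<in> Hom D (pFo x) (pFo (Ao a x))" by auto
next
  fix a x y f assume a: "a \<in> carrier G" and x: "x \<in> Ob C" and y: "y \<in> Ob C" and f: "f \<in> Hom C x y"
  have "HH x (Ao a y) (Cmp CG x y (Ao a y) (canP_phi C G Ao a y) (canP_mor C G Ao Am x y f)) =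
        HH x (Ao a y) (Cmp CG x (Ao a x) (Ao a y) (canP_mor C G Ao Am (Ao a x) (Ao a y) (Am a x y f)) (canP_phi C G Ao a x))"
    by (simp add: phi_nat_CG[OF x y f a])
  then show "Cmp D (pFo x) (pFo y) (pFo (Ao a y)) (p\<phi> a y) (pFm x y f) =
        Cmp D (pFo x) (pFo (Ao a x)) (pFo (Ao a y)) (pFm (Ao a x) (Ao a y) (Am a x y f)) (p\<phi> a x)"
    using a x y f by (simp add: H_cmp)
next
  fix a x assume a: "a \<in> carrier G" and x: "x \<in> Ob C"
  have ia: "inv\<^bsub>G\<^esub> a \<in> carrier G" using a by simp
  let ?\<psi> = "HH (Ao a x) x (canP_phi C G Ao (inv\<^bsub>G\<^esub> a) (Ao a x))"
  have ph: "canP_phi C G Ao (inv\<^bsub>G\<^esub> a) (Ao a x) \<in> Hom CG (Ao a x) x"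
    using canPphi_hom[of "Ao a x" "inv\<^bsub>G\<^esub> a"] a x by simp
  have c1: "Cmp CG x (Ao a x) x (canP_phi C G Ao (inv\<^bsub>G\<^esub> a) (Ao a x)) (canP_phi C G Ao a x) = Idm CG x"
    using phi_comp_CG[OF x a ia] phi_one_CG[OF x] a x by simp
  have c2: "Cmp CG (Ao a x) x (Ao a x) (canP_phi C G Ao a x) (canP_phi C G Ao (inv\<^bsub>G\<^esub> a) (Ao a x)) = Idm CG (Ao a x)"
    using phi_comp_CG[of "Ao a x" "inv\<^bsub>G\<^esub> a" a] phi_one_CG[of "Ao a x"] a x ia by simp
  show "\<exists>\<psi>\<in>Hom D (pFo (Ao a x)) (pFo x).
        Cmp D (pFo x) (pFo (Ao a x)) (pFo x) \<psi> (p\<phi> a x) = Idm D (pFo x) \<and>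
        Cmp D (pFo (Ao a x)) (pFo x) (pFo (Ao a x)) (p\<phi> a x) \<psi> = Idm D (pFo (Ao a x))"
  proof (intro bexI conjI)
    show "?\<psi> \<in> Hom D (pFo (Ao a x)) (pFo x)" using ph a x by auto
    show "Cmp D (pFo x) (pFo (Ao a x)) (pFo x) ?\<psi> (p\<phi> a x) = Idm D (pFo x)"
      using a x ph by (simp add: H_cmp[symmetric] c1)
    show "Cmp D (pFo (Ao a x)) (pFo x) (pFo (Ao a x)) (p\<phi> a x) ?\<psi> = Idm D (pFo (Ao a x))"
      using a x ph by (simp add: H_cmp[symmetric] c2)
  qed
next
  fix x assume x: "x \<in> Ob C"
  then show "p\<phi> \<one>\<^bsub>G\<^esub> x = Idm D (pFo x)" by (simp add: phi_one_CG)
next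
  fix a b x assume a: "a \<in> carrier G" and b: "b \<in> carrier G" and x: "x \<in> Ob C"
  have "HH x (Ao b (Ao a x)) (Cmp CG x (Ao a x) (Ao b (Ao a x)) (canP_phi C G Ao b (Ao a x)) (canP_phi C G Ao a x))
      = HH x (Ao b (Ao a x)) (canP_phi C G Ao (b \<otimes>\<^bsub>G\<^esub> a) x)"
    by (simp add: phi_comp_CG[OF x a b])
  then show "Cmp D (pFo x) (pFo (Ao a x)) (pFo (Ao b (Ao a x))) (p\<phi> b (Ao a x)) (p\<phi> a x) = p\<phi> (b \<otimes>\<^bsub>G\<^esub> a) x"
    using a b x by (simp add: H_cmp)
qed

lemma pb_Inv: "pullback_obj C G Ao Am (Ho, HH) \<in> Inv_obj C D G Ao Am"
  unfolding pb_eq Inv_obj_def using pb_inv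
  by (auto simp: ext_functor_def pFo_def pFm_def p\<phi>_def)

lemma decomp_H:
  assumes x: "x \<in> Ob C" and y: "y \<in> Ob C" and f: "f \<in> Hom CG x y"
  shows "HH x y f = hsum D (Ho x) (Ho y) {\<beta>\<in>carrier G. f (\<beta>, \<one>\<^bsub>G\<^esub>) \<noteq> Zerom C x (Ao \<beta> y)}
     (\<lambda>\<beta>. Cmp D (Ho x) (Ho (Ao \<beta> y)) (Ho y) (HH (Ao \<beta> y) y (canP_phi C G Ao (inv\<^bsub>G\<^esub> \<beta>) (Ao \<beta> y)))
                 (HH x (Ao \<beta> y) (canP_mor C G Ao Am x (Ao \<beta> y) (f (\<beta>, \<one>\<^bsub>G\<^esub>)))))"
    (is "_ = hsum D _ _ ?S ?R")
proof -
  let ?T = "\<lambda>\<beta>. Cmp CG x (Ao \<beta> y) y (canP_phi C G Ao (inv\<^bsub>G\<^esub> \<beta>) (Ao \<beta> y))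
                 (canP_mor C G Ao Am x (Ao \<beta> y) (f (\<beta>, \<one>\<^bsub>G\<^esub>)))"
  have fin: "finite ?S" using HomCG_col1[OF f x] .
  have ph: "canP_phi C G Ao (inv\<^bsub>G\<^esub> \<beta>) (Ao \<beta> y) \<in> Hom CG (Ao \<beta> y) y" if "\<beta> \<in> carrier G" for \<beta>
    using canPphi_hom[of "Ao \<beta> y" "inv\<^bsub>G\<^esub> \<beta>"] that y by simp
  have Th: "?T \<beta> \<in> Hom CG x y" if "\<beta> \<in> carrier G" for \<beta>
    using ph[OF that] that x y f by (intro cmp_CG_hom) auto
  have "HH x y f = HH x y (hsum CG x y ?S ?T)" using decomp_CG[OF x y f] by simp
  also have "\<dots> = hsum D (Ho x) (Ho y) ?S (\<lambda>\<beta>. HH x y (?T \<beta>))"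
    by (rule functor_hsum[where C=CG]) (use x y fin Th zero_CG_idem H_add linD in auto)
  also have "\<dots> = hsum D (Ho x) (Ho y) ?S ?R"
    using fin x y f ph by (intro hsum_cong) (auto simp: H_cmp)
  finally show ?thesis .
qed

lemma recon_eq:
  assumes x: "x \<in> Ob C" and y: "y \<in> Ob C" and f: "f \<in> Hom CG x y"
  shows "HH x y f = recon C G Ao D pFo pFm p\<phi> x y f"
proof -
  have e: "recon C G Ao D pFo pFm p\<phi> x y f = hsum D (Ho x) (Ho y) {\<beta>\<in>carrier G. f (\<beta>, \<one>\<^bsub>G\<^esub>) \<noteq> Zerom C x (Ao \<beta> y)}
      (rterm C G Ao D pFo pFm p\<phi> f x y)" using x y by (simp add: recon_def)
  show ?thesis unfolding decomp_H[OF assms] e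
    using HomCG_col1[OF f x] x y f
    by (intro hsum_cong) (auto simp: rterm_def psi_def)
qed

end



locale funH2 = H1: funH C G Ao Am D Ho HH + H2: funH C G Ao Am D Ho' HH'
  for C :: "('o, 'm, 'k::comm_ring_1) lcat" and G :: "'g monoid"
    and Ao :: "'g \<Rightarrow> 'o \<Rightarrow> 'o" and Am :: "'g \<Rightarrow> 'o \<Rightarrow> 'o \<Rightarrow> 'm \<Rightarrow> 'm"
    and D :: "('o2, 'm2, 'k) lcat" and Ho HH Ho' HH'
begin

lemma Inv_hom_iff: "\<theta> \<in> Inv_hom C D G Ao (pullback_obj C G Ao Am (Ho, HH)) (pullback_obj C G Ao Am (Ho', HH')) \<longleftrightarrow>
   \<theta> \<in> extensional (Ob C) \<and>
   (\<forall>x\<in>Ob C. \<theta> x \<in> Hom D (Ho x) (Ho' x)) \<and>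
   (\<forall>x\<in>Ob C. \<forall>y\<in>Ob C. \<forall>f\<in>Hom C x y.
        Cmp D (Ho x) (Ho y) (Ho' y) (\<theta> y) (HH x y (canP_mor C G Ao Am x y f)) =
        Cmp D (Ho x) (Ho' x) (Ho' y) (HH' x y (canP_mor C G Ao Am x y f)) (\<theta> x)) \<and>
   (\<forall>a\<in>carrier G. \<forall>x\<in>Ob C.
         Cmp D (Ho x) (Ho (Ao a x)) (Ho' (Ao a x)) (\<theta> (Ao a x)) (HH x (Ao a x) (canP_phi C G Ao a x)) =
         Cmp D (Ho x) (Ho' x) (Ho' (Ao a x)) (HH' x (Ao a x) (canP_phi C G Ao a x)) (\<theta> x))"
  unfolding Inv_hom_def nat_trans_def H1.pb_eq H2.pb_eq by auto

lemma Fun_hom_iff: "\<eta> \<in> Fun_hom H1.CG D (Ho, HH) (Ho', HH') \<longleftrightarrow>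
   \<eta> \<in> extensional (Ob C) \<and>
   (\<forall>x\<in>Ob C. \<eta> x \<in> Hom D (Ho x) (Ho' x)) \<and>
   (\<forall>x\<in>Ob C. \<forall>y\<in>Ob C. \<forall>f\<in>Hom H1.CG x y.
        Cmp D (Ho x) (Ho y) (Ho' y) (\<eta> y) (HH x y f) = Cmp D (Ho x) (Ho' x) (Ho' y) (HH' x y f) (\<eta> x))"
  unfolding Fun_hom_def nat_trans_def by (simp add: H1.CG_simps)

lemma Fun_to_Inv: "\<eta> \<in> Fun_hom H1.CG D (Ho, HH) (Ho', HH') \<Longrightarrow>
   \<eta> \<in> Inv_hom C D G Ao (pullback_obj C G Ao Am (Ho, HH)) (pullback_obj C G Ao Am (Ho', HH'))"
  unfolding Inv_hom_iff Fun_hom_iff by (blast intro: H1.canP_hom H1.canPphi_hom H1.Ao_ob)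

lemma Inv_to_Fun:
  assumes th: "\<theta> \<in> Inv_hom C D G Ao (pullback_obj C G Ao Am (Ho, HH)) (pullback_obj C G Ao Am (Ho', HH'))"
  shows "\<theta> \<in> Fun_hom H1.CG D (Ho, HH) (Ho', HH')"
proof -
  note T = th[unfolded Inv_hom_iff]
  have ext: "\<theta> \<in> extensional (Ob C)" and thom: "\<And>x. x \<in> Ob C \<Longrightarrow> \<theta> x \<in> Hom D (Ho x) (Ho' x)"
    using T by auto
  have nat: "\<And>x y f. x \<in> Ob C \<Longrightarrow> y \<in> Ob C \<Longrightarrow> f \<in> Hom C x y \<Longrightarrow>
        Cmp D (Ho x) (Ho y) (Ho' y) (\<theta> y) (HH x y (canP_mor C G Ao Am x y f)) =
        Cmp D (Ho x) (Ho' x) (Ho' y) (HH' x y (canP_mor C G Ao Am x y f)) (\<theta> x)"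
    using T by blast
  have cmp: "\<And>a x. a \<in> carrier G \<Longrightarrow> x \<in> Ob C \<Longrightarrow>
         Cmp D (Ho x) (Ho (Ao a x)) (Ho' (Ao a x)) (\<theta> (Ao a x)) (HH x (Ao a x) (canP_phi C G Ao a x)) =
         Cmp D (Ho x) (Ho' x) (Ho' (Ao a x)) (HH' x (Ao a x) (canP_phi C G Ao a x)) (\<theta> x)"
    using T by blast
  show ?thesis unfolding Fun_hom_iff
  proof (intro conjI ballI ext thom)
    fix x y f assume x: "x \<in> Ob C" and y: "y \<in> Ob C" and f: "f \<in> Hom H1.CG x y"
    let ?S = "{\<beta>\<in>carrier G. f (\<beta>, \<one>\<^bsub>G\<^esub>) \<noteq> Zerom C x (Ao \<beta> y)}"
    let ?Ph = "\<lambda>\<beta>. canP_phi C G Ao (inv\<^bsub>G\<^esub> \<beta>) (Ao \<beta> y)"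
    let ?P = "\<lambda>\<beta>. canP_mor C G Ao Am x (Ao \<beta> y) (f (\<beta>, \<one>\<^bsub>G\<^esub>))"
    have fin: "finite ?S" using H1.HomCG_col1[OF f x] .
    have ph: "?Ph \<beta> \<in> Hom H1.CG (Ao \<beta> y) y" if "\<beta> \<in> carrier G" for \<beta>
      using H1.canPphi_hom[of "Ao \<beta> y" "inv\<^bsub>G\<^esub> \<beta>"] that y by simp
    have pp: "?P \<beta> \<in> Hom H1.CG x (Ao \<beta> y)" if "\<beta> \<in> carrier G" for \<beta>
      using that x y f by auto
    have cmpb: "Cmp D (Ho (Ao \<beta> y)) (Ho y) (Ho' y) (\<theta> y) (HH (Ao \<beta> y) y (?Ph \<beta>)) =
         Cmp D (Ho (Ao \<beta> y)) (Ho' (Ao \<beta> y)) (Ho' y) (HH' (Ao \<beta> y) y (?Ph \<beta>)) (\<theta> (Ao \<beta> y))"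
      if b: "\<beta> \<in> carrier G" for \<beta>
      using cmp[of "inv\<^bsub>G\<^esub> \<beta>" "Ao \<beta> y"] b y by simp
    have trm: "Cmp D (Ho x) (Ho y) (Ho' y) (\<theta> y)
          (Cmp D (Ho x) (Ho (Ao \<beta> y)) (Ho y) (HH (Ao \<beta> y) y (?Ph \<beta>)) (HH x (Ao \<beta> y) (?P \<beta>))) =
        Cmp D (Ho x) (Ho' x) (Ho' y)
          (Cmp D (Ho' x) (Ho' (Ao \<beta> y)) (Ho' y) (HH' (Ao \<beta> y) y (?Ph \<beta>)) (HH' x (Ao \<beta> y) (?P \<beta>))) (\<theta> x)"
      if b: "\<beta> \<in> carrier G" for \<beta>
    proof -
      have byO: "Ao \<beta> y \<in> Ob C" using b y by simp
      have h1: "HH (Ao \<beta> y) y (?Ph \<beta>) \<in> Hom D (Ho (Ao \<beta> y)) (Ho y)" using ph[OF b] byO y by auto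
      have h2: "HH x (Ao \<beta> y) (?P \<beta>) \<in> Hom D (Ho x) (Ho (Ao \<beta> y))" using pp[OF b] byO x by auto
      have h1': "HH' (Ao \<beta> y) y (?Ph \<beta>) \<in> Hom D (Ho' (Ao \<beta> y)) (Ho' y)" using ph[OF b] byO y by auto
      have h2': "HH' x (Ao \<beta> y) (?P \<beta>) \<in> Hom D (Ho' x) (Ho' (Ao \<beta> y))" using pp[OF b] byO x by auto
      have t1: "\<theta> y \<in> Hom D (Ho y) (Ho' y)" "\<theta> x \<in> Hom D (Ho x) (Ho' x)" "\<theta> (Ao \<beta> y) \<in> Hom D (Ho (Ao \<beta> y)) (Ho' (Ao \<beta> y))"
        using thom x y byO  by auto
      have n: "Cmp D (Ho x) (Ho (Ao \<beta> y)) (Ho' (Ao \<beta> y)) (\<theta> (Ao \<beta> y)) (HH x (Ao \<beta> y) (?P \<beta>)) =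
            Cmp D (Ho x) (Ho' x) (Ho' (Ao \<beta> y)) (HH' x (Ao \<beta> y) (?P \<beta>)) (\<theta> x)"
        using nat[OF x byO H1.HomCG_hom1[OF f x b]] .
      have "Cmp D (Ho x) (Ho y) (Ho' y) (\<theta> y)
          (Cmp D (Ho x) (Ho (Ao \<beta> y)) (Ho y) (HH (Ao \<beta> y) y (?Ph \<beta>)) (HH x (Ao \<beta> y) (?P \<beta>))) =
          Cmp D (Ho x) (Ho (Ao \<beta> y)) (Ho' y) (Cmp D (Ho (Ao \<beta> y)) (Ho y) (Ho' y) (\<theta> y) (HH (Ao \<beta> y) y (?Ph \<beta>))) (HH x (Ao \<beta> y) (?P \<beta>))"
        by (rule H1.D.cmp_assoc) (use h1 h2 t1 x y byO in auto)
      also have "\<dots> = Cmp D (Ho x) (Ho (Ao \<beta> y)) (Ho' y)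
            (Cmp D (Ho (Ao \<beta> y)) (Ho' (Ao \<beta> y)) (Ho' y) (HH' (Ao \<beta> y) y (?Ph \<beta>)) (\<theta> (Ao \<beta> y))) (HH x (Ao \<beta> y) (?P \<beta>))"
        by (simp only: cmpb[OF b])
      also have "\<dots> = Cmp D (Ho x) (Ho' (Ao \<beta> y)) (Ho' y) (HH' (Ao \<beta> y) y (?Ph \<beta>))
            (Cmp D (Ho x) (Ho (Ao \<beta> y)) (Ho' (Ao \<beta> y)) (\<theta> (Ao \<beta> y)) (HH x (Ao \<beta> y) (?P \<beta>)))"
        by (rule H1.D.cmp_assoc[symmetric]) (use h1' h2 t1 x y byO in auto)
      also have "\<dots> = Cmp D (Ho x) (Ho' (Ao \<beta> y)) (Ho' y) (HH' (Ao \<beta> y) y (?Ph \<beta>))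
            (Cmp D (Ho x) (Ho' x) (Ho' (Ao \<beta> y)) (HH' x (Ao \<beta> y) (?P \<beta>)) (\<theta> x))"
        by (simp only: n)
      also have "\<dots> = Cmp D (Ho x) (Ho' x) (Ho' y)
          (Cmp D (Ho' x) (Ho' (Ao \<beta> y)) (Ho' y) (HH' (Ao \<beta> y) y (?Ph \<beta>)) (HH' x (Ao \<beta> y) (?P \<beta>))) (\<theta> x)"
        by (rule H1.D.cmp_assoc) (use h1' h2' t1 x y byO in auto)
      finally show ?thesis .
    qed
    have "Cmp D (Ho x) (Ho y) (Ho' y) (\<theta> y) (HH x y f) =
        Cmp D (Ho x) (Ho y) (Ho' y) (\<theta> y) (hsum D (Ho x) (Ho y) ?S
          (\<lambda>\<beta>. Cmp D (Ho x) (Ho (Ao \<beta> y)) (Ho y) (HH (Ao \<beta> y) y (?Ph \<beta>)) (HH x (Ao \<beta> y) (?P \<beta>))))"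
      by (simp only: H1.decomp_H[OF x y f])
    also have "\<dots> = hsum D (Ho x) (Ho' y) ?S (\<lambda>\<beta>. Cmp D (Ho x) (Ho y) (Ho' y) (\<theta> y)
          (Cmp D (Ho x) (Ho (Ao \<beta> y)) (Ho y) (HH (Ao \<beta> y) y (?Ph \<beta>)) (HH x (Ao \<beta> y) (?P \<beta>))))"
      by (rule H1.D.hsum_cmp_r) (use fin x y thom ph pp in \<open>auto intro!: H1.D.cmp_hom\<close>)
    also have "\<dots> = hsum D (Ho x) (Ho' y) ?S (\<lambda>\<beta>. Cmp D (Ho x) (Ho' x) (Ho' y)
          (Cmp D (Ho' x) (Ho' (Ao \<beta> y)) (Ho' y) (HH' (Ao \<beta> y) y (?Ph \<beta>)) (HH' x (Ao \<beta> y) (?P \<beta>))) (\<theta> x))"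
      using fin trm by (intro hsum_cong) auto
    also have "\<dots> = Cmp D (Ho x) (Ho' x) (Ho' y) (hsum D (Ho' x) (Ho' y) ?S
          (\<lambda>\<beta>. Cmp D (Ho' x) (Ho' (Ao \<beta> y)) (Ho' y) (HH' (Ao \<beta> y) y (?Ph \<beta>)) (HH' x (Ao \<beta> y) (?P \<beta>)))) (\<theta> x)"
      by (rule H1.D.hsum_cmp_l[symmetric]) (use fin x y thom ph pp in \<open>auto intro!: H1.D.cmp_hom\<close>)
    also have "\<dots> = Cmp D (Ho x) (Ho' x) (Ho' y) (HH' x y f) (\<theta> x)"
      by (simp only: H2.decomp_H[OF x y f])
    finally show "Cmp D (Ho x) (Ho y) (Ho' y) (\<theta> y) (HH x y f) = Cmp D (Ho x) (Ho' x) (Ho' y) (HH' x y f) (\<theta> x)" .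
  qed
qed

end


context gc
begin

lemma funH_I: "lin_cat D \<Longrightarrow> (Ho, HH) \<in> Fun_obj CG D \<Longrightarrow> funH C G Ao Am D Ho HH"
  using gcat by (simp add: funH_def funH_axioms_def gc_def)

lemma obj_bij:
  assumes linD: "lin_cat D"
  shows "bij_betw (pullback_obj C G Ao Am) (Fun_obj CG D) (Inv_obj C D G Ao Am)"
  unfolding bij_betw_def
proof (intro conjI)
  show "inj_on (pullback_obj C G Ao Am) (Fun_obj CG D)"
  proof (rule inj_onI)
    fix H H' assume HF: "H \<in> Fun_obj CG D" and HF': "H' \<in> Fun_obj CG D"
      and eq: "pullback_obj C G Ao Am H = pullback_obj C G Ao Am H'"
    obtain Ho HH where H: "H = (Ho, HH)" by fastforce
    obtain Ho' HH' where H': "H' = (Ho', HH')" by fastforce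
    interpret H1: funH C G Ao Am D Ho HH using funH_I linD HF H by blast
    interpret H2: funH C G Ao Am D Ho' HH' using funH_I linD HF' H' by blast
    have e1: "H1.pFo = H2.pFo" and e2: "H1.pFm = H2.pFm" and e3: "H1.p\<phi> = H2.p\<phi>"
      using eq unfolding H H' H1.pb_eq H2.pb_eq by auto
    have ex1: "Ho \<in> extensional (Ob C)" "\<And>x y. HH x y \<in> extensional (if x \<in> Ob C \<and> y \<in> Ob C then Hom CG x y else {})"
      using H1.H_ext unfolding ext_functor_def by (auto simp: CG_simps)
    have ex2: "Ho' \<in> extensional (Ob C)" "\<And>x y. HH' x y \<in> extensional (if x \<in> Ob C \<and> y \<in> Ob C then Hom CG x y else {})"
      using H2.H_ext unfolding ext_functor_def by (auto simp: CG_simps)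
    have "Ho = Ho'"
      using e1 ex1(1) ex2(1) unfolding H1.pFo_def H2.pFo_def by (metis extensional_restrict)
    moreover have "HH = HH'"
    proof (intro ext)
      fix x y f
      show "HH x y f = HH' x y f"
      proof (cases "x \<in> Ob C \<and> y \<in> Ob C \<and> f \<in> Hom CG x y")
        case True
        then show ?thesis using H1.recon_eq H2.recon_eq e1 e2 e3 by auto
      next
        case False
        then have "HH x y f = undefined" "HH' x y f = undefined"
          using ex1(2)[of x y] ex2(2)[of x y] by (auto simp: extensional_def split: if_splits)
        then show ?thesis by simp
      qed
    qed
    ultimately show "H = H'" using H H' by simp
  qed
next
  show "pullback_obj C G Ao Am ` Fun_obj CG D = Inv_obj C D G Ao Am"
  proof (intro equalityI subsetI)
    fix P assume "P \<in> pullback_obj C G Ao Am ` Fun_obj CG D"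
    then obtain H where HF: "H \<in> Fun_obj CG D" and P: "P = pullback_obj C G Ao Am H" by blast
    obtain Ho HH where H: "H = (Ho, HH)" by fastforce
    interpret H1: funH C G Ao Am D Ho HH using funH_I linD HF H by blast
    show "P \<in> Inv_obj C D G Ao Am" using H1.pb_Inv P H by simp
  next
    fix P assume PI: "P \<in> Inv_obj C D G Ao Am"
    obtain Fo Fm \<phi> where P: "P = ((Fo, Fm), \<phi>)" by (metis prod.collapse)
    have iv: "inv_functor C D G Ao Am Fo Fm \<phi>" and ef: "ext_functor C Fo Fm"
      and ud: "\<forall>a x. a \<notin> carrier G \<or> x \<notin> Ob C \<longrightarrow> \<phi> a x = undefined"
      using PI unfolding P Inv_obj_def by auto
    interpret I: invf C G Ao Am D Fo Fm \<phi>
      using gcat linD iv by (simp add: invf_def invf_axioms_def gc_def)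
    have "(Fo, I.Hm) \<in> Fun_obj CG D" using I.H_fun ef by (simp add: ext_functor_def)
    moreover have "pullback_obj C G Ao Am (Fo, I.Hm) = P" using I.H_pullback[OF ef ud] P by simp
    ultimately show "P \<in> pullback_obj C G Ao Am ` Fun_obj CG D" by (metis image_eqI)
  qed
qed

lemma hom_bij:
  assumes linD: "lin_cat D" and HF: "H \<in> Fun_obj CG D" and HF': "H' \<in> Fun_obj CG D"
  shows "bij_betw (pullback_mor C) (Fun_hom CG D H H')
            (Inv_hom C D G Ao (pullback_obj C G Ao Am H) (pullback_obj C G Ao Am H'))"
proof -
  obtain Ho HH where H: "H = (Ho, HH)" by fastforce
  obtain Ho' HH' where H': "H' = (Ho', HH')" by fastforce
  interpret H2: funH2 C G Ao Am D Ho HH Ho' HH'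
    using funH_I[OF linD HF[unfolded H]] funH_I[OF linD HF'[unfolded H']] by (simp add: funH2_def)
  have pm: "pullback_mor C \<eta> = \<eta>" if "\<eta> \<in> extensional (Ob C)" for \<eta>
    using that by (simp add: pullback_mor_def extensional_restrict)
  have extF: "\<eta> \<in> extensional (Ob C)" if "\<eta> \<in> Fun_hom CG D (Ho, HH) (Ho', HH')" for \<eta>
    using that H2.Fun_hom_iff by blast
  have extI: "\<eta> \<in> extensional (Ob C)" if "\<eta> \<in> Inv_hom C D G Ao (pullback_obj C G Ao Am (Ho, HH)) (pullback_obj C G Ao Am (Ho', HH'))" for \<eta>
    using that H2.Inv_hom_iff by blast
  show ?thesis unfolding H H' bij_betw_def
  proof (intro conjI)
    show "inj_on (pullback_mor C) (Fun_hom CG D (Ho, HH) (Ho', HH'))"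
      by (rule inj_onI) (simp add: pm extF)
    show "pullback_mor C ` Fun_hom CG D (Ho, HH) (Ho', HH') =
       Inv_hom C D G Ao (pullback_obj C G Ao Am (Ho, HH)) (pullback_obj C G Ao Am (Ho', HH'))"
    proof (intro equalityI subsetI)
      fix \<theta> assume "\<theta> \<in> pullback_mor C ` Fun_hom CG D (Ho, HH) (Ho', HH')"
      then obtain \<eta> where e1: "\<eta> \<in> Fun_hom CG D (Ho, HH) (Ho', HH')" and e2: "\<theta> = pullback_mor C \<eta>" by blast
      have "\<theta> = \<eta>" using e2 pm extF[OF e1] by simp
      then show "\<theta> \<in> Inv_hom C D G Ao (pullback_obj C G Ao Am (Ho, HH)) (pullback_obj C G Ao Am (Ho', HH'))"
        using H2.Fun_to_Inv[OF e1] by simp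
    next
      fix \<theta> assume th: "\<theta> \<in> Inv_hom C D G Ao (pullback_obj C G Ao Am (Ho, HH)) (pullback_obj C G Ao Am (Ho', HH'))"
      then have "\<theta> \<in> Fun_hom CG D (Ho, HH) (Ho', HH')" by (rule H2.Inv_to_Fun)
      moreover have "pullback_mor C \<theta> = \<theta>" by (rule pm[OF extI[OF th]])
      ultimately show "\<theta> \<in> pullback_mor C ` Fun_hom CG D (Ho, HH) (Ho', HH')" by (metis image_eqI)
    qed
  qed
qed

lemma id_pres:
  "pullback_mor C (nt_id CG D (fst H)) = nt_id C D (fst (fst (pullback_obj C G Ao Am H)))"
  unfolding pullback_mor_def nt_id_def pullback_obj_def CG_simps(1)
  by (intro restrict_ext) simp

lemma comp_pres:
  "pullback_mor C (nt_comp CG D (fst H) (fst H') (fst H'') \<eta>' \<eta>) =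
   nt_comp C D (fst (fst (pullback_obj C G Ao Am H))) (fst (fst (pullback_obj C G Ao Am H')))
            (fst (fst (pullback_obj C G Ao Am H''))) (pullback_mor C \<eta>') (pullback_mor C \<eta>)"
  unfolding pullback_mor_def nt_comp_def pullback_obj_def CG_simps(1)
  by (intro restrict_ext) simp

end

theorem mainTheorem3:
  fixes C :: "('o, 'm, 'k::comm_ring_1) lcat"
    and G :: "'g monoid"
    and Ao :: "'g \<Rightarrow> 'o \<Rightarrow> 'o"
    and Am :: "'g \<Rightarrow> 'o \<Rightarrow> 'o \<Rightarrow> 'm \<Rightarrow> 'm"
    and D :: "('o2, 'm2, 'k) lcat"
  assumes "gcat C G Ao Am"
    and "lin_cat D"
  defines "CG \<equiv> orbit_cat C G Ao Am"
  shows
    \<comment> \<open>bijective on objects\<close>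
    "bij_betw (pullback_obj C G Ao Am) (Fun_obj CG D) (Inv_obj C D G Ao Am)
     \<comment> \<open>bijective on each hom-set\<close>
     \<and> (\<forall>H\<in>Fun_obj CG D. \<forall>H'\<in>Fun_obj CG D.
          bij_betw (pullback_mor C) (Fun_hom CG D H H')
            (Inv_hom C D G Ao (pullback_obj C G Ao Am H) (pullback_obj C G Ao Am H')))
     \<comment> \<open>preserves identities\<close>
     \<and> (\<forall>H\<in>Fun_obj CG D.
          pullback_mor C (nt_id CG D (fst H)) = nt_id C D (fst (fst (pullback_obj C G Ao Am H))))
     \<comment> \<open>preserves composition\<close>
     \<and> (\<forall>H\<in>Fun_obj CG D. \<forall>H'\<in>Fun_obj CG D. \<forall>H''\<in>Fun_obj CG D.
          \<forall>\<eta>\<in>Fun_hom CG D H H'. \<forall>\<eta>'\<in>Fun_hom CG D H' H''.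
          pullback_mor C (nt_comp CG D (fst H) (fst H') (fst H'') \<eta>' \<eta>) =
          nt_comp C D (fst (fst (pullback_obj C G Ao Am H))) (fst (fst (pullback_obj C G Ao Am H')))
            (fst (fst (pullback_obj C G Ao Am H''))) (pullback_mor C \<eta>') (pullback_mor C \<eta>))"
proof -
  have g: "gc C G Ao Am" by (rule gc.intro) (rule assms(1))
  show ?thesis unfolding CG_def
    using gc.obj_bij[OF g assms(2)] gc.hom_bij[OF g assms(2)] gc.id_pres[OF g] gc.comp_pres[OF g]
    by blast
qed


end
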